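(* Let $p\in\mathbb{N}$ and suppose $f\in A_p$ is reversible in $G$ but not flowable. Let $d,q,\delta$ and $\omega$ be as described in the context. Then: (1) If $g\in R_f(G)$, then $g$ commutes with $\omega$, and $g$ reverses $f^{r/d}$ for each $r\in\mathbb{Z}$. (2) $\delta=q$, and $p/q$ is odd. (3) If $\omega$ is chosen with $m(\omega)=e^{2\pi i/\delta}$, then $\{g^2: g\in R_f(G)\}=\{\omega^l: l \text{ odd}\}$; and (for any choice of generator $\omega$) the set of orders of reversers is $\{\mathrm{ord}(g): g\in R_f(G)\}=\{2r: r\in\mathbb{N},\ r\mid q,\ q/r \text{ odd}\}$.
   Context: $G$ denotes the group (under composition) of biholomorphic germs at $0$ in one complex variable: germs of functions holomorphic near $0$ with $f(0)=0$ and $f'(0)\neq 0$; $m(f)=f'(0)$ is the multiplier. $G_1=\{f\in G: f'(0)=1\}$, and for $p\in\mathbb{N}$, $G_p=\{f\in G_1: f^{(k)}(0)=0 \text{ for } 2\le k\le p\}$ and $A_p=G_p\setminus G_{p+1}$. For $f\in G$, $R_f(G)$ is the set of $g\in G$ with $g^{-1}\circ f\circ g=f^{-1}$ ($g$ reverses $f$), $f$ is reversible if $R_f(G)\ne\emptyset$, and $C_f(K)$ denotes the centraliser of $f$ in a subgroup $K$. A flow in $G_1$ is a continuous group homomorphism $t\mapsto f_t$ from $(\mathbb{R},+)$ or $(\mathbb{C},+)$ into $G_1$; $f\in G_1$ is flowable if $f=f_1$ for some flow. For $f\in A_p$ not flowable, it is known that $C_f(G)$ is abelian, $C_f(G_1)$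 is infinite cyclic with a unique generator $f^{1/d}$ satisfying $(f^{1/d})^d=f$ for a positive integer $d$ (and $f^{r/d}$ denotes $(f^{1/d})^r$), $q$ denotes the index of $C_f(G_1)$ in $C_f(G)$ (the quotient is cyclic of order $q$, with $q\mid p$), $\delta$ denotes the order of the torsion subgroup of $C_f(G)$, which is cyclic, and $\omega$ denotes a generator of this torsion subgroup. *)

theory Defs
  imports "HOL-Analysis.Analysis" "HOL-Computational_Algebra.Formal_Power_Series"
begin

text \<open>Germs of holomorphic functions at 0 are represented by their Taylor series at 0,
  i.e. complex formal power series with positive radius of convergence.
  Composition of germs f \<circ> g is fps composition f oo g, the identity germ is fps_X,
  the inverse germ is the compositional inverse fps_inv.\<close>

definition germG :: "complex fps set" where
  "germG = {f. fps_conv_radius f > 0 \<and> fps_nth f 0 = 0 \<and> fps_nth f 1 \<noteq> 0}"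

definition mult :: "complex fps \<Rightarrow> complex" where
  "mult f = fps_nth f 1"

definition germG1 :: "complex fps set" where
  "germG1 = {f \<in> germG. fps_nth f 1 = 1}"

text \<open>f^(k)(0) = k! * fps_nth f k, so vanishing of derivatives is vanishing of coefficients.\<close>
definition germGp :: "nat \<Rightarrow> complex fps set" where
  "germGp p = {f \<in> germG1. \<forall>k. 2 \<le> k \<and> k \<le> p \<longrightarrow> fps_nth f k = 0}"

definition germAp :: "nat \<Rightarrow> complex fps set" where
  "germAp p = germGp p - germGp (Suc p)"

definition gnpow :: "complex fps \<Rightarrow> nat \<Rightarrow> complex fps" where
  "gnpow f n = ((\<lambda>g. f oo g) ^^ n) fps_X"

definition gipow :: "complex fps \<Rightarrow> int \<Rightarrow> complex fps" where
  "gipow f k = (if 0 \<le> k then gnpow f (nat k) else gnpow (fps_inv f) (nat (- k)))"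

definition reversers :: "complex fps \<Rightarrow> complex fps set" where
  "reversers f = {g \<in> germG. fps_inv g oo f oo g = fps_inv f}"

definition reversible :: "complex fps \<Rightarrow> bool" where
  "reversible f \<longleftrightarrow> reversers f \<noteq> {}"

definition centraliser :: "complex fps \<Rightarrow> complex fps set \<Rightarrow> complex fps set" where
  "centraliser f K = {g \<in> K. g oo f = f oo g}"

text \<open>Flows: continuous homomorphisms (R,+) \<rightarrow> G1 or (C,+) \<rightarrow> G1; continuity is
  with respect to the topology of coefficientwise convergence on germs.\<close>
definition real_flow :: "(real \<Rightarrow> complex fps) \<Rightarrow> bool" where
  "real_flow \<phi> \<longleftrightarrow> (\<forall>t. \<phi> t \<in> germG1) \<and> (\<forall>s t. \<phi> (s + t) = \<phi> s oo \<phi> t)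
     \<and> (\<forall>n. continuous_on UNIV (\<lambda>t. fps_nth (\<phi> t) n))"

definition complex_flow :: "(complex \<Rightarrow> complex fps) \<Rightarrow> bool" where
  "complex_flow \<phi> \<longleftrightarrow> (\<forall>t. \<phi> t \<in> germG1) \<and> (\<forall>s t. \<phi> (s + t) = \<phi> s oo \<phi> t)
     \<and> (\<forall>n. continuous_on UNIV (\<lambda>t. fps_nth (\<phi> t) n))"

definition flowable :: "complex fps \<Rightarrow> bool" where
  "flowable f \<longleftrightarrow> f \<in> germG1 \<and>
     ((\<exists>\<phi>. real_flow \<phi> \<and> \<phi> 1 = f) \<or> (\<exists>\<phi>. complex_flow \<phi> \<and> \<phi> 1 = f))"

definition gcoset :: "complex fps \<Rightarrow> complex fps set \<Rightarrow> complex fps set" where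
  "gcoset g H = (\<lambda>h. g oo h) ` H"

definition gindex :: "complex fps set \<Rightarrow> complex fps set \<Rightarrow> nat" where
  "gindex K H = card {gcoset g H | g. g \<in> K}"

definition torsion :: "complex fps set \<Rightarrow> complex fps set" where
  "torsion K = {g \<in> K. \<exists>n>0. gnpow g n = fps_X}"

text \<open>Order of a germ; 0 encodes infinite order.\<close>
definition gord :: "complex fps \<Rightarrow> nat" where
  "gord g = (if \<exists>n>0. gnpow g n = fps_X then (LEAST n. n > 0 \<and> gnpow g n = fps_X) else 0)"

end

theory Submission
  imports Defs "HOL-Complex_Analysis.Complex_Analysis"
begin

lemma comp_has_exp:
  fixes f g :: "complex fps"
  assumes rf: "fps_conv_radius f > 0" and f0: "fps_nth f 0 = 0" and rg: "fps_conv_radius g > 0"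
  shows "(\<lambda>z. eval_fps g (eval_fps f z)) has_fps_expansion fps_expansion (\<lambda>z. eval_fps g (eval_fps f z)) 0"
proof -
  have a1: "eval_fps f analytic_on {0}" using rf by (intro analytic_on_eval_fps) (auto simp: zero_ereal_def)
  have a2: "eval_fps g analytic_on (eval_fps f ` {0})" using rg f0
    by (intro analytic_on_eval_fps) (auto simp: eval_fps_at_0 zero_ereal_def)
  have "(eval_fps g \<circ> eval_fps f) analytic_on {0}" by (rule analytic_on_compose[OF a1 a2])
  hence "(\<lambda>z. eval_fps g (eval_fps f z)) analytic_on {0}" by (simp add: o_def)
  thus ?thesis by (rule analytic_at_imp_has_fps_expansion_0)
qed

lemma comp_deriv_ev:
  fixes f g :: "complex fps"
  assumes rf: "fps_conv_radius f > 0" and f0: "fps_nth f 0 = 0" and rg: "fps_conv_radius g > 0"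
  shows "eventually (\<lambda>z. deriv (\<lambda>z. eval_fps g (eval_fps f z)) z =
            eval_fps (fps_deriv g) (eval_fps f z) * eval_fps (fps_deriv f) z) (nhds 0)"
proof -
  define S where "S = eball 0 (fps_conv_radius f) \<inter> eval_fps f -` eball 0 (fps_conv_radius g)"
  have "open S" unfolding S_def
    by (intro continuous_open_preimage continuous_on_eval_fps) auto
  moreover have "0 \<in> S" using rf rg f0 by (auto simp: S_def eval_fps_at_0 zero_ereal_def)
  ultimately have ev: "eventually (\<lambda>z. z \<in> S) (nhds 0)" by (rule eventually_nhds_in_open)
  show ?thesis using ev
  proof eventually_elim
    case (elim z)
    hence z1: "norm z < fps_conv_radius f" and z2: "norm (eval_fps f z) < fps_conv_radius g"
      by (auto simp: S_def)
    have "((\<lambda>z. eval_fps g (eval_fps f z)) has_field_derivative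
           eval_fps (fps_deriv g) (eval_fps f z) * eval_fps (fps_deriv f) z) (at z)"
      by (rule DERIV_chain2[OF has_field_derivative_eval_fps[OF z2] has_field_derivative_eval_fps[OF z1]])
    thus ?case by (rule DERIV_imp_deriv)
  qed
qed

lemma comp_exp_aux:
  fixes f :: "complex fps"
  assumes rf: "fps_conv_radius f > 0" and f0: "fps_nth f 0 = 0"
  shows "\<forall>g. fps_conv_radius g > 0 \<longrightarrow> (\<forall>k\<le>n. fps_nth (fps_expansion (\<lambda>z. eval_fps g (eval_fps f z)) 0) k = fps_nth (g oo f) k)"
proof (induction n)
  case 0
  show ?case
  proof (intro allI impI, clarsimp)
    fix g :: "complex fps"
    show "fps_nth (fps_expansion (\<lambda>z. eval_fps g (eval_fps f z)) 0) 0 = fps_nth g 0"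
      using f0 by (simp add: fps_expansion_def eval_fps_at_0)
  qed
next
  case (Suc n)
  show ?case
  proof (intro allI impI)
    fix g :: "complex fps" and k assume rg: "fps_conv_radius g > 0" and k: "k \<le> Suc n"
    define E where "E = (\<lambda>g. fps_expansion (\<lambda>z. eval_fps g (eval_fps f z)) 0)"
    have rg': "fps_conv_radius (fps_deriv g) > 0" using rg fps_conv_radius_deriv[of g] by (auto)
    have rf': "fps_conv_radius (fps_deriv f) > 0" using rf fps_conv_radius_deriv[of f] by (auto)
    have e1: "deriv (\<lambda>z. eval_fps g (eval_fps f z)) has_fps_expansion fps_deriv (E g)"
      unfolding E_def by (intro has_fps_expansion_deriv comp_has_exp rf f0 rg)
    have e2: "(\<lambda>z. eval_fps (fps_deriv g) (eval_fps f z) * eval_fps (fps_deriv f) z) has_fps_expansion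
              E (fps_deriv g) * fps_deriv f"
      unfolding E_def by (intro has_fps_expansion_mult comp_has_exp rf f0 rg' eval_fps_has_fps_expansion rf')
    have e2': "deriv (\<lambda>z. eval_fps g (eval_fps f z)) has_fps_expansion E (fps_deriv g) * fps_deriv f"
      using e2 has_fps_expansion_cong[OF comp_deriv_ev[OF rf f0 rg]] by blast
    have D: "fps_deriv (E g) = E (fps_deriv g) * fps_deriv f"
      by (rule fps_expansion_unique_complex[OF e1 e2'])
    show "fps_nth (E g) k = fps_nth (g oo f) k" unfolding E_def[symmetric]
    proof (cases k)
      case 0 thus ?thesis using f0 by (simp add: E_def fps_expansion_def eval_fps_at_0)
    next
      case (Suc k')
      hence k': "k' \<le> n" using k by simp
      have IH: "\<forall>i\<le>n. fps_nth (E (fps_deriv g)) i = fps_nth (fps_deriv g oo f) i"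
        using Suc.IH rg' by (simp add: E_def)
      have "fps_nth (E (fps_deriv g) * fps_deriv f) k' = fps_nth ((fps_deriv g oo f) * fps_deriv f) k'"
        unfolding fps_mult_nth using IH k' by (intro sum.cong) auto
      also have "(fps_deriv g oo f) * fps_deriv f = fps_deriv (g oo f)"
        using fps_compose_deriv[OF f0, of g] by simp
      finally have "fps_nth (fps_deriv (E g)) k' = fps_nth (fps_deriv (g oo f)) k'" using D by simp
      hence "of_nat (Suc k') * fps_nth (E g) (Suc k') = of_nat (Suc k') * fps_nth (g oo f) (Suc k')"
        by (simp add: fps_deriv_def)
      hence "fps_nth (E g) (Suc k') = fps_nth (g oo f) (Suc k')"
        by (metis mult_left_cancel of_nat_eq_0_iff nat.simps(3))
      thus ?thesis using Suc by simp
    qed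
  qed
qed

lemma comp_has_exp2:
  fixes f g :: "complex fps"
  assumes rf: "fps_conv_radius f > 0" and f0: "fps_nth f 0 = 0" and rg: "fps_conv_radius g > 0"
  shows "(\<lambda>z. eval_fps g (eval_fps f z)) has_fps_expansion (g oo f)"
proof -
  have "fps_expansion (\<lambda>z. eval_fps g (eval_fps f z)) 0 = g oo f"
    using comp_exp_aux[OF rf f0] rg by (auto simp: fps_eq_iff)
  thus ?thesis using comp_has_exp[OF rf f0 rg] by simp
qed

lemma radius_compose_pos:
  fixes f g :: "complex fps"
  assumes "fps_conv_radius f > 0" "fps_nth f 0 = 0" "fps_conv_radius g > 0"
  shows "fps_conv_radius (g oo f) > 0"
  using comp_has_exp2[OF assms] by (simp add: has_fps_expansion_def)

lemma radius_inv_pos: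
  fixes g :: "complex fps"
  assumes rg: "fps_conv_radius g > 0" and g0: "fps_nth g 0 = 0" and g1: "fps_nth g 1 \<noteq> 0"
  shows "fps_conv_radius (fps_inv g) > 0"
proof -
  define R where "R = eball (0::complex) (fps_conv_radius g)"
  have holg: "eval_fps g holomorphic_on R" unfolding R_def by (intro holomorphic_on_eval_fps) auto
  have "0 \<in> R" using rg by (auto simp: R_def zero_ereal_def)
  have "deriv (eval_fps g) 0 = fps_nth g 1"
    using eval_fps_deriv[of 0 g] rg by (simp add: eval_fps_at_0 zero_ereal_def fps_deriv_def)
  hence "deriv (eval_fps g) 0 \<noteq> 0" using g1 by simp
  then obtain r where r: "r > 0" "ball 0 r \<subseteq> R" "inj_on (eval_fps g) (ball 0 r)"
    using has_complex_derivative_locally_injective[OF holg \<open>0 \<in> R\<close>] by (auto simp: R_def)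
  have holg': "eval_fps g holomorphic_on ball 0 r" using holg r(2) by (rule holomorphic_on_subset)
  obtain \<psi> where psi: "\<psi> holomorphic_on (eval_fps g ` ball 0 r)"
      "\<And>z. z \<in> ball 0 r \<Longrightarrow> \<psi> (eval_fps g z) = z"
    using holomorphic_has_inverse[OF holg' open_ball r(3)] by metis
  define V where "V = eval_fps g ` ball 0 r"
  have "open V" unfolding V_def by (rule open_mapping_thm3[OF holg' open_ball r(3)])
  have "0 \<in> V" unfolding V_def using r(1) g0
    by (auto simp: eval_fps_at_0 intro!: image_eqI[of 0 _ 0])
  have psi0: "\<psi> 0 = 0" using psi(2)[of 0] r(1) g0 by (simp add: eval_fps_at_0)
  have expp: "\<psi> has_fps_expansion fps_expansion \<psi> 0"
    using psi(1) \<open>open V\<close> \<open>0 \<in> V\<close> unfolding V_def[symmetric] by blast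
  define P where "P = fps_expansion \<psi> 0"
  have rP: "fps_conv_radius P > 0" using expp by (simp add: has_fps_expansion_def P_def)
  have P0: "fps_nth P 0 = 0" using psi0 by (simp add: P_def fps_expansion_def)
  have evV: "eventually (\<lambda>w. w \<in> V) (nhds 0)" by (rule eventually_nhds_in_open[OF \<open>open V\<close> \<open>0 \<in> V\<close>])
  have evP: "eventually (\<lambda>w. eval_fps P w = \<psi> w) (nhds 0)" using expp by (simp add: has_fps_expansion_def P_def)
  have "eventually (\<lambda>w. eval_fps g (eval_fps P w) = w) (nhds 0)"
    using evV evP
  proof eventually_elim
    case (elim w)
    then obtain z where z: "z \<in> ball 0 r" "w = eval_fps g z" by (auto simp: V_def)
    thus ?case using elim psi(2)[OF z(1)] by simp
  qed
  hence e1: "(\<lambda>w. w) has_fps_expansion (g oo P)"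
    using has_fps_expansion_cong[OF _ refl, of "\<lambda>w. eval_fps g (eval_fps P w)" "\<lambda>w. w" "g oo P"]
          comp_has_exp2[OF rP P0 rg] by blast
  have e2: "(\<lambda>w. w) has_fps_expansion fps_X" using has_fps_expansion_fps_X by simp
  have gP: "g oo P = fps_X" by (rule fps_expansion_unique_complex[OF e1 e2])
  have "fps_inv g = fps_inv g oo (g oo P)" using gP by (simp add: fps_inv_def)
  also have "\<dots> = (fps_inv g oo g) oo P" using fps_compose_assoc[OF P0 g0] by simp
  also have "\<dots> = P" using fps_inv[OF g0 g1] P0 by simp
  finally show ?thesis using rP by simp
qed

definition fg :: "complex fps \<Rightarrow> bool" where "fg x \<longleftrightarrow> fps_nth x 0 = 0 \<and> fps_nth x 1 \<noteq> 0"

lemma compose_nth1 [simp]: "fps_nth b 0 = 0 \<Longrightarrow> fps_nth (a oo b) (Suc 0) = fps_nth a (Suc 0) * (fps_nth b (Suc 0) :: complex)"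
  by (simp add: fps_compose_nth)

lemma inv_nth0 [simp]: "fps_nth (fps_inv (a::complex fps)) 0 = 0"
  by (simp add: fps_inv_def)

lemma inv_nth1 [simp]: "fps_nth (fps_inv (a::complex fps)) (Suc 0) = 1 / fps_nth a (Suc 0)"
  by (simp add: fps_inv_def)

lemma fg_comp [simp]: "fg a \<Longrightarrow> fg b \<Longrightarrow> fg (a oo b)"
  by (simp add: fg_def compose_nth1)

lemma fg_inv [simp]: "fg a \<Longrightarrow> fg (fps_inv a)"
  by (simp add: fg_def inv_nth1)

lemma fg_X [simp]: "fg fps_X" by (simp add: fg_def)

lemma fg0 [simp]: "fg a \<Longrightarrow> fps_nth a 0 = 0" by (simp add: fg_def)

lemma oo_assoc [simp]: "fps_nth b 0 = 0 \<Longrightarrow> fps_nth c 0 = (0::complex) \<Longrightarrow> a oo (b oo c) = a oo b oo c"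
  by (rule fps_compose_assoc)

lemma oo_X_left [simp]: "fps_nth a 0 = (0::complex) \<Longrightarrow> fps_X oo a = a" by simp

lemma inv_left [simp]: "fg a \<Longrightarrow> fps_inv a oo a = fps_X"
  by (simp add: fg_def fps_inv)
lemma inv_right [simp]: "fg a \<Longrightarrow> a oo fps_inv a = fps_X"
  by (simp add: fg_def fps_inv_right)
lemma inv_left2 [simp]: "fg a \<Longrightarrow> b oo fps_inv a oo a = b"
  by (metis fg0 inv_left fps_compose_fps_X inv_nth0 oo_assoc)
lemma inv_right2 [simp]: "fg a \<Longrightarrow> b oo a oo fps_inv a = b"
  by (metis fg0 inv_right fps_compose_fps_X inv_nth0 oo_assoc)

lemma inv_unique: assumes "fg a" "fg b" "a oo b = fps_X" shows "fps_inv a = b"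
proof -
  have "fps_inv a oo (a oo b) = fps_inv a" using assms(3) by simp
  moreover have "fps_inv a oo (a oo b) = fps_inv a oo a oo b"
    using assms(1,2) by (intro oo_assoc) auto
  moreover have "fps_inv a oo a oo b = b" using assms(1,2) by simp
  ultimately show ?thesis by simp
qed

lemma inv_inv [simp]: "fg a \<Longrightarrow> fps_inv (fps_inv a) = a"
  by (rule inv_unique) auto

lemma inv_comp: "fg a \<Longrightarrow> fg b \<Longrightarrow> fps_inv (a oo b) = fps_inv b oo fps_inv a"
  by (rule inv_unique) auto

lemma inv_X [simp]: "fps_inv fps_X = (fps_X :: complex fps)"
  by (rule inv_unique) auto

lemma cancel_left: "fg a \<Longrightarrow> fg b \<Longrightarrow> fg c \<Longrightarrow> a oo b = a oo c \<Longrightarrow> b = c"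
  by (metis fg0 fps_inv inv_left oo_X_left oo_assoc fg_inv)
lemma cancel_right: "fg a \<Longrightarrow> fg b \<Longrightarrow> fg c \<Longrightarrow> b oo a = c oo a \<Longrightarrow> b = c"
  by (metis inv_right2)

lemma gnpow_0 [simp]: "gnpow x 0 = fps_X" by (simp add: gnpow_def)
lemma gnpow_Suc: "gnpow x (Suc n) = x oo gnpow x n" by (simp add: gnpow_def)

lemma gnpow_fg [simp]: "fg x \<Longrightarrow> fg (gnpow x n)"
  by (induction n) (auto simp: gnpow_Suc)

lemma gnpow_nth1: "fg x \<Longrightarrow> fps_nth (gnpow x n) (Suc 0) = (fps_nth x (Suc 0))^n"
  by (induction n) (auto simp: gnpow_Suc compose_nth1)

lemma gnpow_add: "fg x \<Longrightarrow> gnpow x (m + n) = gnpow x m oo gnpow x n"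
  by (induction m) (auto simp: gnpow_Suc)

lemma gnpow_1 [simp]: "fg x \<Longrightarrow> gnpow x (Suc 0) = x" by (simp add: gnpow_Suc)

lemma gnpow_Suc2: "fg x \<Longrightarrow> gnpow x (Suc n) = gnpow x n oo x"
  using gnpow_add[of x n 1] by simp

lemma gnpow_mult: "fg x \<Longrightarrow> gnpow x (m * n) = gnpow (gnpow x m) n"
proof (induction n)
  case (Suc n)
  have "gnpow x (m * Suc n) = gnpow x (m * n) oo gnpow x m" using Suc.prems
    by (simp add: gnpow_add[symmetric] add.commute)
  also have "\<dots> = gnpow (gnpow x m) (Suc n)" using Suc by (simp add: gnpow_Suc2)
  finally show ?case .
qed simp

lemma gnpow_comm: "fg a \<Longrightarrow> fg b \<Longrightarrow> a oo b = b oo a \<Longrightarrow> gnpow a n oo b = b oo gnpow a n"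
proof (induction n)
  case (Suc n)
  have "gnpow a (Suc n) oo b = a oo (gnpow a n oo b)" using Suc.prems by (simp add: gnpow_Suc)
  also have "\<dots> = a oo b oo gnpow a n" using Suc by simp
  also have "\<dots> = b oo gnpow a (Suc n)" using Suc.prems by (simp add: gnpow_Suc)
  finally show ?case .
qed (simp add: fg_def)

lemma gnpow_inv: "fg x \<Longrightarrow> gnpow (fps_inv x) n = fps_inv (gnpow x n)"
proof (induction n)
  case (Suc n)
  have "fps_inv (gnpow x (Suc n)) = fps_inv (gnpow x n) oo fps_inv x"
    using Suc.prems by (simp add: gnpow_Suc inv_comp)
  thus ?case using Suc by (simp add: gnpow_Suc2)
qed simp

lemma gipow_nat [simp]: "gipow x (int n) = gnpow x n" by (simp add: gipow_def)
lemma gipow_0 [simp]: "gipow x 0 = fps_X" by (simp add: gipow_def)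
lemma gipow_fg [simp]: "fg x \<Longrightarrow> fg (gipow x k)" by (simp add: gipow_def)

lemma gipow_neg_nat: "gipow x (- int n) = gnpow (fps_inv x) n"
  by (cases n) (auto simp: gipow_def simp del: of_nat_Suc)

lemma gipow_succ: "fg x \<Longrightarrow> gipow x (k + 1) = gipow x k oo x"
proof (cases "k \<ge> 0")
  case True
  define n where "n = nat k"
  have "k = int n" using True by (simp add: n_def)
  moreover assume "fg x"
  moreover have "k + 1 = int (Suc n)" using \<open>k = int n\<close> by simp
  ultimately show ?thesis using gnpow_Suc2[of x n] by (simp only: gipow_nat)
next
  case False
  define n where "n = nat (- k) - 1"
  have n: "k = - int (Suc n)" using False by (simp add: n_def)
  assume x: "fg x"
  have "k + 1 = - int n" using n by simp
  hence "gipow x (k+1) = gnpow (fps_inv x) n" by (simp add: gipow_neg_nat)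
  moreover have "gipow x k = gnpow (fps_inv x) n oo fps_inv x"
    using n x by (simp only: gipow_neg_nat gnpow_Suc2 fg_inv)
  ultimately show ?thesis using x by simp
qed

lemma gipow_pred: "fg x \<Longrightarrow> gipow x (k - 1) = gipow x k oo fps_inv x"
  using gipow_succ[of x "k - 1"] by simp

lemma gipow_add: "fg x \<Longrightarrow> gipow x (i + j) = gipow x i oo gipow x j"
proof (induction j rule: int_induct[where k=0])
  case base thus ?case by simp
next
  case (step1 j)
  have "gipow x (i + (j + 1)) = gipow x (i + j) oo x" using step1 gipow_succ[of x "i+j"] by (simp add: add.assoc)
  also have "\<dots> = gipow x i oo (gipow x j oo x)" using step1 by simp
  finally show ?case using step1 gipow_succ[of x j] by simp
next
  case (step2 j)
  have "gipow x (i + (j - 1)) = gipow x (i + j) oo fps_inv x" using step2 gipow_pred[of x "i+j"] by (simp add: algebra_simps)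
  also have "\<dots> = gipow x i oo (gipow x j oo fps_inv x)" using step2 by simp
  finally show ?case using step2 gipow_pred[of x j] by simp
qed

lemma gipow_1 [simp]: "fg x \<Longrightarrow> gipow x 1 = x" using gipow_nat[of x 1] by simp

lemma gipow_neg: "fg x \<Longrightarrow> gipow x (- k) = fps_inv (gipow x k)"
  by (rule inv_unique[symmetric]) (auto simp: gipow_add[symmetric])

lemma gipow_mult: "fg x \<Longrightarrow> gipow x (i * j) = gipow (gipow x i) j"
proof (induction j rule: int_induct[where k=0])
  case (step1 j)
  thus ?case by (simp add: algebra_simps gipow_add gipow_succ)
next
  case (step2 j)
  have "gipow x (i * (j - 1)) = gipow x (i * j + (- i))"
    by (simp add: algebra_simps)
  also have "\<dots> = gipow x (i * j) oo gipow x (- i)" using step2 by (simp only: gipow_add)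
  also have "\<dots> = gipow (gipow x i) j oo fps_inv (gipow x i)" using step2 by (simp add: gipow_neg)
  also have "\<dots> = gipow (gipow x i) (j - 1)" using step2 by (simp add: gipow_pred)
  finally show ?case .
qed simp

lemma gipow_nth1: "fg x \<Longrightarrow> fps_nth (gipow x k) (Suc 0) = (fps_nth x (Suc 0)) powi k"
proof (cases "k \<ge> 0")
  case True
  define n where "n = nat k"
  have "k = int n" using True by (simp add: n_def)
  moreover assume "fg x"
  ultimately show ?thesis by (simp add: gnpow_nth1)
next
  case False
  define n where "n = nat (- k)"
  have n: "k = - int n" using False by (simp add: n_def)
  assume x: "fg x"
  have "fps_nth (gipow x k) (Suc 0) = (1 / fps_nth x (Suc 0)) ^ n"
    using x by (simp only: n gipow_neg_nat gnpow_nth1 fg_inv inv_nth1)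
  thus ?thesis using n by (simp add: power_int_minus power_one_over divide_inverse power_inverse)
qed

lemma gipow_comm: assumes a: "fg a" and b: "fg b" and ab: "a oo b = b oo a"
  shows "gipow a k oo b = b oo gipow a k"
proof (induction k rule: int_induct[where k=0])
  case (step1 j)
  have "gipow a (j+1) oo b = gipow a j oo (a oo b)" using a b by (simp add: gipow_succ)
  also have "\<dots> = gipow a j oo (b oo a)" by (simp only: ab)
  also have "\<dots> = (gipow a j oo b) oo a" using a b by simp
  also have "\<dots> = (b oo gipow a j) oo a" by (simp only: step1.IH)
  also have "\<dots> = b oo gipow a (j+1)" using a b by (simp add: gipow_succ)
  finally show ?case .
next
  case (step2 j)
  have ab': "fps_inv a oo b = b oo fps_inv a"
  proof -
    have "fps_inv a oo b = fps_inv a oo (b oo a) oo fps_inv a" using a b by simp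
    also have "\<dots> = fps_inv a oo (a oo b) oo fps_inv a" by (simp only: ab)
    also have "\<dots> = b oo fps_inv a" using a b by simp
    finally show ?thesis .
  qed
  have "gipow a (j-1) oo b = gipow a j oo (fps_inv a oo b)" using a b by (simp add: gipow_pred)
  also have "\<dots> = gipow a j oo (b oo fps_inv a)" by (simp only: ab')
  also have "\<dots> = (gipow a j oo b) oo fps_inv a" using a b by simp
  also have "\<dots> = (b oo gipow a j) oo fps_inv a" by (simp only: step2.IH)
  also have "\<dots> = b oo gipow a (j-1)" using a b by (simp add: gipow_pred)
  finally show ?case .
qed (simp add: b)

lemma inv_comm: assumes a: "fg a" and b: "fg b" and ab: "a oo b = b oo a"
  shows "fps_inv a oo b = b oo fps_inv a"
  using gipow_comm[OF a b ab, of "-1"] a by (simp add: gipow_neg)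

lemma gipow_comm2: "fg a \<Longrightarrow> fg b \<Longrightarrow> a oo b = b oo a \<Longrightarrow> gipow a i oo gipow b j = gipow b j oo gipow a i"
  by (metis gipow_comm gipow_fg)

lemma gipow_prod: assumes a: "fg a" and b: "fg b" and ab: "a oo b = b oo a"
  shows "gipow (a oo b) k = gipow a k oo gipow b k"
proof (induction k rule: int_induct[where k=0])
  case (step1 j)
  have c: "gipow b j oo a = a oo gipow b j" using gipow_comm[OF b a ab[symmetric], of j] .
  have "gipow (a oo b) (j+1) = gipow a j oo gipow b j oo (a oo b)" using a b by (simp add: gipow_succ step1.IH)
  also have "\<dots> = gipow a j oo (gipow b j oo a) oo b" using a b by simp
  also have "\<dots> = gipow a j oo (a oo gipow b j) oo b" by (simp only: c)
  also have "\<dots> = gipow a (j+1) oo gipow b (j+1)" using a b by (simp add: gipow_succ)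
  finally show ?case .
next
  case (step2 j)
  have c: "gipow b j oo fps_inv a = fps_inv a oo gipow b j"
    using gipow_comm[OF b _ inv_comm[OF a b ab, symmetric], of j] a by simp
  have "gipow (a oo b) (j-1) = gipow a j oo gipow b j oo (fps_inv b oo fps_inv a)"
    using a b by (simp add: gipow_pred step2.IH inv_comp)
  also have "\<dots> = gipow a j oo gipow b j oo (fps_inv a oo fps_inv b)"
    using inv_comm[OF b _ inv_comm[OF a b ab, symmetric]] a by simp
  also have "\<dots> = gipow a j oo (gipow b j oo fps_inv a) oo fps_inv b" using a b by simp
  also have "\<dots> = gipow a j oo (fps_inv a oo gipow b j) oo fps_inv b" by (simp only: c)
  also have "\<dots> = gipow a (j-1) oo gipow b (j-1)" using a b by (simp add: gipow_pred)
  finally show ?case .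
qed simp

lemma gipow_conj: "fg x \<Longrightarrow> fg y \<Longrightarrow> gipow (fps_inv y oo x oo y) k = fps_inv y oo gipow x k oo y"
proof (induction k rule: int_induct[where k=0])
  case (step1 j)
  thus ?case by (simp add: gipow_succ)
next
  case (step2 j)
  thus ?case by (simp add: gipow_pred inv_comp)
qed simp

lemma gnpow_as_gipow: "gnpow x n = gipow x (int n)" by simp

definition gpf :: "nat \<Rightarrow> complex fps \<Rightarrow> bool" where
  "gpf p f \<longleftrightarrow> fps_nth f 0 = 0 \<and> fps_nth f 1 = 1 \<and> (\<forall>k. 2 \<le> k \<and> k \<le> p \<longrightarrow> fps_nth f k = 0)"

lemma sum_single_nat:
  fixes h :: "nat \<Rightarrow> complex"
  assumes "\<And>j. j \<le> n \<Longrightarrow> j \<noteq> a \<Longrightarrow> h j = 0"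
  shows "(\<Sum>j=0..n. h j) = (if a \<le> n then h a else 0)"
proof (cases "a \<le> n")
  case True
  have "(\<Sum>j=0..n. h j) = h a + (\<Sum>j\<in>{0..n}-{a}. h j)"
    using True by (subst sum.remove[of _ a]) auto
  also have "(\<Sum>j\<in>{0..n}-{a}. h j) = 0" using assms by (intro sum.neutral) auto
  finally show ?thesis using True by simp
next
  case False
  thus ?thesis using assms by (intro trans[OF sum.neutral]) auto
qed

lemma sum_two_nat:
  fixes h :: "nat \<Rightarrow> complex"
  assumes "\<And>j. j \<le> n \<Longrightarrow> j \<noteq> a \<Longrightarrow> j \<noteq> b \<Longrightarrow> h j = 0" and "a \<noteq> b"
  shows "(\<Sum>j=0..n. h j) = (if a \<le> n then h a else 0) + (if b \<le> n then h b else 0)"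
proof -
  have "(\<Sum>j=0..n. h j) = (\<Sum>j=0..n. (if j = a then h j else 0) + (if j = a then 0 else h j))"
    by (intro sum.cong) auto
  also have "\<dots> = (\<Sum>j=0..n. (if j = a then h j else 0)) + (\<Sum>j=0..n. (if j = a then 0 else h j))"
    by (rule sum.distrib)
  also have "(\<Sum>j=0..n. (if j = a then h j else 0)) = (if a \<le> n then h a else 0)"
    by (subst sum_single_nat[of n a]) auto
  also have "(\<Sum>j=0..n. (if j = a then 0 else h j)) = (if b \<le> n then h b else 0)"
    using assms by (subst sum_single_nat[of n b]) auto
  finally show ?thesis .
qed

lemma gpf_pow:
  assumes f: "gpf p f" and p: "1 \<le> p" and n: "n \<le> p + 1"
  shows "fps_nth (f ^ i) n = (if n = i then 1 else 0) + (if i = 1 \<and> n = p + 1 then fps_nth f (p+1) else 0)"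
  using n
proof (induction i arbitrary: n)
  case 0 thus ?case using p by simp
next
  case (Suc i)
  show ?case
  proof (cases i)
    case 0
    thus ?thesis using f p Suc.prems unfolding gpf_def
      by (cases "n = 0"; cases "n = 1"; cases "n = p + 1") auto
  next
    case (Suc i')
    have g0: "fps_nth (f ^ i) 0 = 0" using Suc f by (simp add: gpf_def startsby_zero_power)
    have "fps_nth (f ^ Suc i) n = (\<Sum>j=0..n. fps_nth f j * fps_nth (f ^ i) (n - j))"
      by (simp add: fps_mult_nth)
    also have "\<dots> = (if 1 \<le> n then fps_nth f 1 * fps_nth (f ^ i) (n - 1) else 0)"
    proof (rule sum_single_nat)
      fix j assume j: "j \<le> n" "j \<noteq> 1"
      show "fps_nth f j * fps_nth (f ^ i) (n - j) = 0"
      proof (cases "j \<le> p")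
        case True thus ?thesis using j f by (cases "j = 0") (auto simp: gpf_def)
      next
        case False thus ?thesis using j Suc.prems g0 by (auto intro!: mult_eq_0_iff[THEN iffD2])
      qed
    qed
    also have "\<dots> = (if n = Suc i then 1 else 0)"
      using Suc.IH[of "n - 1"] Suc.prems f \<open>i = Suc i'\<close> g0 by (auto simp: gpf_def)
    finally show ?thesis using \<open>i = Suc i'\<close> by simp
  qed
qed

lemma gpf_compA:
  assumes f: "gpf p f" and p: "1 \<le> p" and n: "n \<le> p + 1"
  shows "fps_nth (x oo f) n = fps_nth x n + (if n = p + 1 then fps_nth x 1 * fps_nth f (p+1) else 0)"
proof -
  have "fps_nth (x oo f) n = (\<Sum>i=0..n. fps_nth x i * fps_nth (f ^ i) n)" by (rule fps_compose_nth)
  also have "\<dots> = (\<Sum>i=0..n. fps_nth x i * ((if n = i then 1 else 0) + (if i = 1 \<and> n = p + 1 then fps_nth f (p+1) else 0)))"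
    using gpf_pow[OF f p n] by simp
  also have "\<dots> = (\<Sum>i=0..n. (if i = n then fps_nth x i else 0)) + (\<Sum>i=0..n. (if i = 1 then (if n = p + 1 then fps_nth x i * fps_nth f (p+1) else 0) else 0))"
    by (subst sum.distrib[symmetric], intro sum.cong) (auto simp: algebra_simps)
  also have "\<dots> = fps_nth x n + (if n = p + 1 then fps_nth x 1 * fps_nth f (p+1) else 0)"
    using p by (simp add: sum.delta' split: if_split)
  finally show ?thesis .
qed

lemma gpf_compB:
  assumes f: "gpf p f" and p: "1 \<le> p" and n: "n \<le> p + 1" and x0: "fps_nth x 0 = 0"
  shows "fps_nth (f oo x) n = fps_nth x n + (if n = p + 1 then fps_nth f (p+1) * (fps_nth x 1)^(p+1) else 0)"
proof -
  have "fps_nth (f oo x) n = (\<Sum>i=0..n. fps_nth f i * fps_nth (x ^ i) n)" by (rule fps_compose_nth)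
  also have "\<dots> = (if 1 \<le> n then fps_nth f 1 * fps_nth (x ^ 1) n else 0)
     + (if p + 1 \<le> n then fps_nth f (p+1) * fps_nth (x ^ (p+1)) n else 0)"
  proof (rule sum_two_nat)
    fix j assume j: "j \<le> n" "j \<noteq> 1" "j \<noteq> p + 1"
    thus "fps_nth f j * fps_nth (x ^ j) n = 0" using f n by (cases "j = 0") (auto simp: gpf_def)
  qed (use p in auto)
  also have "\<dots> = fps_nth x n + (if n = p + 1 then fps_nth f (p+1) * (fps_nth x 1)^(p+1) else 0)"
    using f n p x0 startsby_zero_power_nth_same[OF x0, of "p+1"] by (cases "n = 0") (auto simp: gpf_def)
  finally show ?thesis .
qed

lemma germG_iff: "x \<in> germG \<longleftrightarrow> fps_conv_radius x > 0 \<and> fg x"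
  by (auto simp: germG_def fg_def)

lemma germG_fg: "x \<in> germG \<Longrightarrow> fg x" by (simp add: germG_iff)

lemma germG_comp [simp]: "x \<in> germG \<Longrightarrow> y \<in> germG \<Longrightarrow> x oo y \<in> germG"
  unfolding germG_iff using radius_compose_pos by (auto)

lemma germG_inv [simp]: "x \<in> germG \<Longrightarrow> fps_inv x \<in> germG"
  unfolding germG_iff using radius_inv_pos by (auto simp: fg_def)

lemma germG_X [simp]: "fps_X \<in> germG" by (simp add: germG_iff)

lemma germG_gnpow [simp]: "x \<in> germG \<Longrightarrow> gnpow x n \<in> germG"
  by (induction n) (auto simp: gnpow_Suc)

lemma germG_gipow [simp]: "x \<in> germG \<Longrightarrow> gipow x k \<in> germG"
  by (simp add: gipow_def)

lemma mult_comp: "fg y \<Longrightarrow> mult (x oo y) = mult x * mult y"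
  by (simp add: mult_def)
lemma mult_inv: "mult (fps_inv x) = 1 / mult x" by (simp add: mult_def)
lemma mult_X [simp]: "mult fps_X = 1" by (simp add: mult_def)
lemma mult_gipow: "fg x \<Longrightarrow> mult (gipow x k) = mult x powi k"
  by (simp add: mult_def gipow_nth1)
lemma mult_gnpow: "fg x \<Longrightarrow> mult (gnpow x n) = mult x ^ n"
  by (simp add: mult_def gnpow_nth1)
lemma mult_nz: "fg x \<Longrightarrow> mult x \<noteq> 0" by (simp add: mult_def fg_def)

lemma gipow_X [simp]: "gipow fps_X k = fps_X"
proof -
  have "gnpow fps_X n = fps_X" for n by (induction n) (auto simp: gnpow_Suc)
  thus ?thesis by (simp add: gipow_def)
qed

lemma gnpow_X [simp]: "gnpow fps_X n = fps_X"
  using gipow_X[of "int n"] by simp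

lemma centraliser_iff: "x \<in> centraliser f K \<longleftrightarrow> x \<in> K \<and> x oo f = f oo x"
  by (simp add: centraliser_def)

lemma germG1_iff: "x \<in> germG1 \<longleftrightarrow> x \<in> germG \<and> mult x = 1"
  by (simp add: germG1_def mult_def)

locale S5 =
  fixes p :: nat and f h \<omega> :: "complex fps" and d :: nat
  assumes fA: "f \<in> germAp p" and frev: "reversible f"
    and hC: "h \<in> centraliser f germG1" and hgen: "centraliser f germG1 = range (gipow h)"
    and dpos: "0 < d" and hd: "gnpow h d = f"
    and \<omega>T: "\<omega> \<in> torsion (centraliser f germG)"
    and \<omega>gen: "torsion (centraliser f germG) = range (gipow \<omega>)"
begin

abbreviation "CC \<equiv> centraliser f germG"
abbreviation "C1 \<equiv> centraliser f germG1"
abbreviation "TT \<equiv> torsion (centraliser f germG)"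
abbreviation "RR \<equiv> reversers f"
definition "a0 = fps_nth f (p+1)"

lemma p_pos: "1 \<le> p" and f_gpf: "gpf p f" and a0_nz: "a0 \<noteq> 0" and fG: "f \<in> germG"
proof -
  have f1: "f \<in> germGp p" and f2: "f \<notin> germGp (Suc p)" using fA by (auto simp: germAp_def)
  then obtain k where k: "2 \<le> k" "k \<le> Suc p" "fps_nth f k \<noteq> 0"
    using f1 by (auto simp: germGp_def)
  have "\<not> k \<le> p" using k f1 by (auto simp: germGp_def)
  hence "k = Suc p" using k by simp
  thus "1 \<le> p" using k by simp
  show "a0 \<noteq> 0" using k \<open>k = Suc p\<close> by (simp add: a0_def)
  show "gpf p f" using f1 by (auto simp: germGp_def germG1_def germG_def gpf_def)
  show "f \<in> germG" using f1 by (auto simp: germGp_def germG1_def)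
qed

lemma f_fg: "fg f" using fG germG_fg by blast

lemma CC_iff: "x \<in> CC \<longleftrightarrow> x \<in> germG \<and> x oo f = f oo x" by (rule centraliser_iff)
lemma C1_iff: "x \<in> C1 \<longleftrightarrow> x \<in> CC \<and> mult x = 1" by (auto simp: centraliser_iff germG1_iff)
lemma TT_iff: "x \<in> TT \<longleftrightarrow> x \<in> CC \<and> (\<exists>n>0. gnpow x n = fps_X)" by (simp add: torsion_def)
lemma RR_iff: "g \<in> RR \<longleftrightarrow> g \<in> germG \<and> fps_inv g oo f oo g = fps_inv f" by (simp add: reversers_def)

lemma CC_fg: "x \<in> CC \<Longrightarrow> fg x" by (simp add: CC_iff germG_fg)
lemma CC_G: "x \<in> CC \<Longrightarrow> x \<in> germG" by (simp add: CC_iff)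

lemma f_CC: "f \<in> CC" using fG by (simp add: CC_iff)
lemma X_CC: "fps_X \<in> CC" using f_fg by (simp add: CC_iff)
lemma CC_comp: "x \<in> CC \<Longrightarrow> y \<in> CC \<Longrightarrow> x oo y \<in> CC"
proof -
  assume x: "x \<in> CC" and y: "y \<in> CC"
  have fx: "fg x" "fg y" using x y CC_fg by auto
  have "x oo y oo f = x oo (y oo f)" using fx f_fg by simp
  also have "\<dots> = x oo (f oo y)" using y by (simp add: CC_iff)
  also have "\<dots> = (x oo f) oo y" using fx f_fg by simp
  also have "\<dots> = (f oo x) oo y" using x by (simp add: CC_iff)
  also have "\<dots> = f oo (x oo y)" using fx f_fg by simp
  finally show ?thesis using x y by (simp add: CC_iff)
qed
lemma CC_inv: "x \<in> CC \<Longrightarrow> fps_inv x \<in> CC"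
  using inv_comm[OF CC_fg f_fg] by (auto simp: CC_iff)
lemma CC_gnpow: "x \<in> CC \<Longrightarrow> gnpow x n \<in> CC"
  by (induction n) (auto simp: gnpow_Suc X_CC CC_comp)
lemma CC_gipow: "x \<in> CC \<Longrightarrow> gipow x k \<in> CC"
  by (auto simp: gipow_def CC_gnpow CC_inv)

lemma mult_CC: "x \<in> CC \<Longrightarrow> mult x ^ p = 1"
proof -
  assume x: "x \<in> CC"
  have x0: "fps_nth x 0 = 0" and x1: "fps_nth x 1 \<noteq> 0" using CC_fg[OF x] by (auto simp: fg_def)
  have "fps_nth (x oo f) (p+1) = fps_nth (f oo x) (p+1)" using x by (simp add: CC_iff)
  hence "fps_nth x 1 * a0 = a0 * fps_nth x 1 ^ (p+1)"
    using gpf_compA[OF f_gpf p_pos, of "p+1" x] gpf_compB[OF f_gpf p_pos, of "p+1" x] x0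
    by (simp add: a0_def)
  hence "fps_nth x 1 * (fps_nth x 1 ^ p - 1) = 0" using a0_nz by (simp add: algebra_simps)
  thus ?thesis using x1 by (simp add: mult_def)
qed

lemma finv_gpf: "gpf p (fps_inv f)" and finv_a: "fps_nth (fps_inv f) (p+1) = - a0"
proof -
  let ?x = "fps_inv f"
  have e: "f oo ?x = fps_X" using f_fg by simp
  have x1: "fps_nth ?x 1 = 1" using f_gpf by (simp add: gpf_def)
  have low: "fps_nth ?x n = fps_nth fps_X n" if "n \<le> p" for n
    using gpf_compB[OF f_gpf p_pos, of n ?x] that e by simp
  show "gpf p ?x" using low x1 by (auto simp: gpf_def)
  have "fps_nth ?x (p+1) + a0 = 0"
    using gpf_compB[OF f_gpf p_pos, of "p+1" ?x] e x1 p_pos by (simp add: a0_def)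
  thus "fps_nth ?x (p+1) = - a0" by (simp add: add_eq_0_iff2)
qed

lemma RR_eq: "g \<in> RR \<Longrightarrow> f oo g = g oo fps_inv f"
proof -
  assume g: "g \<in> RR"
  hence gf: "fg g" and e: "fps_inv g oo f oo g = fps_inv f" by (auto simp: RR_iff germG_fg)
  have "g oo (fps_inv g oo f oo g) = g oo fps_inv f" using e by simp
  thus ?thesis using gf f_fg by simp
qed

lemma mult_RR: "g \<in> RR \<Longrightarrow> mult g ^ p = -1"
proof -
  assume g: "g \<in> RR"
  have gf: "fg g" using g by (simp add: RR_iff germG_fg)
  have x0: "fps_nth g 0 = 0" and x1: "fps_nth g 1 \<noteq> 0" using gf by (auto simp: fg_def)
  have e1: "fps_nth (f oo g) (p+1) = fps_nth g (p+1) + a0 * fps_nth g 1 ^ (p+1)"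
    using gpf_compB[OF f_gpf p_pos, of "p+1" g] x0 by (simp add: a0_def)
  have e2: "fps_nth (g oo fps_inv f) (p+1) = fps_nth g (p+1) + fps_nth g 1 * (- a0)"
    using gpf_compA[OF finv_gpf p_pos, of "p+1" g] finv_a by simp
  have "fps_nth (f oo g) (p+1) = fps_nth (g oo fps_inv f) (p+1)" using RR_eq[OF g] by simp
  hence "a0 * fps_nth g 1 ^ (p+1) = - (fps_nth g 1 * a0)" using e1 e2 by simp
  hence "fps_nth g 1 * a0 * (fps_nth g 1 ^ p + 1) = 0" by (simp add: algebra_simps)
  hence "fps_nth g 1 ^ p + 1 = 0" using x1 a0_nz by simp
  thus ?thesis by (simp add: mult_def add_eq_0_iff2)
qed

lemma gnpow_f: "gpf p (gnpow f n) \<and> fps_nth (gnpow f n) (p+1) = of_nat n * a0"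
proof (induction n)
  case 0 thus ?case using p_pos by (auto simp: gpf_def)
next
  case (Suc n)
  have e: "gnpow f (Suc n) = gnpow f n oo f" using f_fg by (simp add: gnpow_Suc2)
  have low: "fps_nth (gnpow f (Suc n)) k = fps_nth (gnpow f n) k" if "k \<le> p" for k
    using gpf_compA[OF f_gpf p_pos, of k "gnpow f n"] that e by simp
  have x1: "fps_nth (gnpow f n) 1 = 1" using Suc by (simp add: gpf_def)
  have hi: "fps_nth (gnpow f (Suc n)) (p+1) = of_nat n * a0 + a0"
    using gpf_compA[OF f_gpf p_pos, of "p+1" "gnpow f n"] e Suc x1 by (simp add: a0_def)
  show ?case using Suc low hi p_pos by (auto simp: gpf_def algebra_simps)
qed

lemma gnpow_f_X: "gnpow f n = fps_X \<Longrightarrow> n = 0"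
proof -
  assume "gnpow f n = fps_X"
  hence "of_nat n * a0 = fps_nth fps_X (p+1)" using gnpow_f[of n] by simp
  also have "\<dots> = 0" using p_pos by simp
  finally show "n = 0" using a0_nz by simp
qed

lemma gipow_f_X: "gipow f k = fps_X \<Longrightarrow> k = 0"
proof (cases "k \<ge> 0")
  case True
  assume "gipow f k = fps_X"
  hence "gnpow f (nat k) = fps_X" using True by (simp add: gipow_def)
  thus ?thesis using gnpow_f_X True by fastforce
next
  case False
  assume "gipow f k = fps_X"
  hence "fps_inv (gnpow f (nat (-k))) = fps_X" using False f_fg by (simp add: gipow_def gnpow_inv)
  hence "gnpow f (nat (-k)) = fps_X" using f_fg by (metis gnpow_fg inv_X inv_inv)
  thus ?thesis using gnpow_f_X False by fastforce
qed

lemma h_C1: "h \<in> C1" using hC .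
lemma h_CC: "h \<in> CC" using hC by (simp add: C1_iff)
lemma h_fg: "fg h" using h_CC CC_fg by blast
lemma h_G: "h \<in> germG" using h_CC CC_G by blast
lemma mult_h: "mult h = 1" using hC by (simp add: C1_iff)

lemma f_gipow_h: "gipow f j = gipow h (int d * j)"
  using gipow_mult[OF h_fg, of "int d" j] hd by simp

lemma gipow_h_X: "gipow h k = fps_X \<Longrightarrow> k = 0"
proof -
  assume "gipow h k = fps_X"
  hence "gipow h (k * int d) = fps_X" by (simp add: gipow_mult[OF h_fg])
  hence "gipow f k = fps_X" using f_gipow_h by (simp add: mult.commute)
  thus "k = 0" by (rule gipow_f_X)
qed

lemma gipow_h_inj: "gipow h i = gipow h j \<Longrightarrow> i = j"
proof -
  assume e: "gipow h i = gipow h j"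
  have "gipow h (i - j) = gipow h i oo gipow h (- j)" using h_fg by (simp add: gipow_add[symmetric])
  also have "\<dots> = fps_X" using e h_fg by (simp add: gipow_neg)
  finally have "i - j = 0" by (rule gipow_h_X)
  thus "i = j" by simp
qed

lemma C1_pow: "x \<in> CC \<Longrightarrow> mult x = 1 \<Longrightarrow> \<exists>k. x = gipow h k"
  using hgen C1_iff by blast

lemma f_is_hd: "f = gipow h (int d)" using hd by simp

end

lemma conj_comp: "fg g \<Longrightarrow> fg x \<Longrightarrow> fg y \<Longrightarrow>
  fps_inv g oo (x oo y) oo g = (fps_inv g oo x oo g) oo (fps_inv g oo y oo g)"
  by simp

lemma conj_to_comm: "fg x \<Longrightarrow> fg y \<Longrightarrow> x oo y oo fps_inv x = y \<Longrightarrow> x oo y = y oo x"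
  by (metis inv_left2 fg_inv inv_inv)

lemma conj_to_comm': "fg g \<Longrightarrow> fg y \<Longrightarrow> fps_inv g oo y oo g = y \<Longrightarrow> y oo g = g oo y"
proof -
  assume a: "fg g" "fg y" "fps_inv g oo y oo g = y"
  have "g oo (fps_inv g oo y oo g) = g oo y" using a(3) by simp
  thus ?thesis using a(1,2) by simp
qed

context S5 begin

lemma h_central: "x \<in> CC \<Longrightarrow> x oo h = h oo x"
proof -
  assume x: "x \<in> CC"
  have xf: "fg x" using x CC_fg by blast
  define y where "y = x oo h oo fps_inv x"
  have yC: "y \<in> CC" unfolding y_def by (intro CC_comp CC_inv x h_CC)
  have "mult y = 1" unfolding y_def using xf h_fg mult_nz[OF xf]
    by (simp add: mult_comp mult_inv mult_h)
  then obtain j where j: "y = gipow h j" using C1_pow yC by blast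
  have "gipow y (int d) = fps_inv (fps_inv x) oo gipow h (int d) oo fps_inv x"
    unfolding y_def using gipow_conj[OF h_fg fg_inv[OF xf], of "int d"] xf by simp
  also have "\<dots> = x oo f oo fps_inv x" using xf hd by simp
  also have "\<dots> = f oo x oo fps_inv x" using x by (simp add: CC_iff)
  also have "\<dots> = gipow h (int d)" using xf f_fg hd by simp
  finally have "gipow h (j * int d) = gipow h (int d)" using j h_fg by (simp add: gipow_mult)
  hence "j * int d = int d" by (rule gipow_h_inj)
  hence "j = 1" using dpos by simp
  hence "x oo h oo fps_inv x = h" using j h_fg by (simp add: y_def)
  thus ?thesis by (rule conj_to_comm[OF xf h_fg])
qed

lemma h_central_pow: "x \<in> CC \<Longrightarrow> x oo gipow h k = gipow h k oo x"
  using gipow_comm[OF h_fg CC_fg h_central[symmetric]] by simp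

lemma RR_fg: "g \<in> RR \<Longrightarrow> fg g" by (simp add: RR_iff germG_fg)
lemma RR_G: "g \<in> RR \<Longrightarrow> g \<in> germG" by (simp add: RR_iff)

lemma RR_conj: "g \<in> RR \<Longrightarrow> x \<in> CC \<Longrightarrow> fps_inv g oo x oo g \<in> CC"
proof -
  assume g: "g \<in> RR" and x: "x \<in> CC"
  have gf: "fg g" and xf: "fg x" using g x RR_fg CC_fg by auto
  have e: "fps_inv g oo f oo g = fps_inv f" using g by (simp add: RR_iff)
  define y where "y = fps_inv g oo x oo g"
  have yf: "fg y" using gf xf by (simp add: y_def)
  have "y oo fps_inv f = y oo (fps_inv g oo f oo g)" using e by simp
  also have "\<dots> = fps_inv g oo (x oo f) oo g" using gf xf f_fg by (simp add: y_def)
  also have "\<dots> = fps_inv g oo (f oo x) oo g" using x by (simp add: CC_iff)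
  also have "\<dots> = (fps_inv g oo f oo g) oo y" using gf xf f_fg by (simp add: y_def)
  also have "\<dots> = fps_inv f oo y" using e by simp
  finally have c: "y oo fps_inv f = fps_inv f oo y" .
  have "fps_inv (fps_inv f) oo y = y oo fps_inv (fps_inv f)"
    using inv_comm[OF fg_inv[OF f_fg] yf c[symmetric]] .
  hence "y oo f = f oo y" using f_fg by simp
  moreover have "y \<in> germG" unfolding y_def using g x by (simp add: RR_G CC_G)
  ultimately show ?thesis by (simp add: CC_iff y_def)
qed

lemma RR_conj_h: "g \<in> RR \<Longrightarrow> fps_inv g oo h oo g = fps_inv h"
proof -
  assume g: "g \<in> RR"
  have gf: "fg g" using g RR_fg by blast
  define y where "y = fps_inv g oo h oo g"
  have yC: "y \<in> CC" unfolding y_def by (rule RR_conj[OF g h_CC])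
  have "mult y = 1" unfolding y_def using gf h_fg mult_nz[OF gf]
    by (simp add: mult_comp mult_inv mult_h)
  then obtain j where j: "y = gipow h j" using C1_pow yC by blast
  have "gipow y (int d) = fps_inv g oo gipow h (int d) oo g"
    unfolding y_def by (rule gipow_conj[OF h_fg gf])
  also have "\<dots> = fps_inv f" using hd g by (simp add: RR_iff)
  also have "\<dots> = gipow h (- int d)" using hd h_fg by (simp add: gipow_neg)
  finally have "gipow h (j * int d) = gipow h (- int d)" using j h_fg by (simp add: gipow_mult)
  hence "j * int d = - int d" by (rule gipow_h_inj)
  hence "(j + 1) * int d = 0" by (simp add: algebra_simps)
  hence "j = -1" using dpos by simp
  thus ?thesis using j h_fg y_def by (simp add: gipow_neg)
qed

lemma claim1b: "g \<in> RR \<Longrightarrow> fps_inv g oo gipow h r oo g = fps_inv (gipow h r)"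
proof -
  assume g: "g \<in> RR"
  have gf: "fg g" using g RR_fg by blast
  have "fps_inv g oo gipow h r oo g = gipow (fps_inv g oo h oo g) r"
    using gipow_conj[OF h_fg gf] by simp
  also have "\<dots> = gipow (gipow h (-1)) r" using RR_conj_h[OF g] h_fg by (simp add: gipow_neg)
  also have "\<dots> = gipow h (- r)" using h_fg by (simp add: gipow_mult[symmetric])
  also have "\<dots> = fps_inv (gipow h r)" using h_fg by (simp add: gipow_neg)
  finally show ?thesis .
qed

lemma \<omega>_CC: "\<omega> \<in> CC" using \<omega>T TT_iff by blast
lemma \<omega>_fg: "fg \<omega>" using \<omega>_CC CC_fg by blast

lemma TT_C1: "x \<in> TT \<Longrightarrow> mult x = 1 \<Longrightarrow> x = fps_X"
proof -
  assume x: "x \<in> TT" and m: "mult x = 1"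
  then obtain n where n: "n > 0" "gnpow x n = fps_X" and xC: "x \<in> CC" by (auto simp: TT_iff)
  obtain k where k: "x = gipow h k" using C1_pow xC m by blast
  have "gipow h (k * int n) = fps_X" using n k h_fg by (simp add: gipow_mult)
  hence "k * int n = 0" by (rule gipow_h_X)
  hence "k = 0" using n by simp
  thus ?thesis using k by simp
qed

lemma \<omega>_ord: obtains n where "n > 0" "gnpow \<omega> n = fps_X"
  using \<omega>T TT_iff by blast

lemma gipow_\<omega>_TT: "gipow \<omega> i \<in> TT"
  using \<omega>gen by auto

lemma TT_inj: "x \<in> TT \<Longrightarrow> y \<in> TT \<Longrightarrow> mult x = mult y \<Longrightarrow> x = y"
proof -
  assume x: "x \<in> TT" and y: "y \<in> TT" and m: "mult x = mult y"
  obtain i j where ij: "x = gipow \<omega> i" "y = gipow \<omega> j" using x y \<omega>gen by auto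
  define z where "z = gipow \<omega> (i - j)"
  have zT: "z \<in> TT" unfolding z_def by (rule gipow_\<omega>_TT)
  have z: "z = x oo fps_inv y" unfolding z_def ij using \<omega>_fg
    by (simp add: gipow_add[symmetric] gipow_neg[symmetric])
  have "mult z = 1" using z m mult_nz[OF gipow_fg[OF \<omega>_fg]] ij \<omega>_fg
    by (simp add: mult_comp mult_inv)
  hence "z = fps_X" using TT_C1 zT by blast
  hence "x oo fps_inv y oo y = y" using z \<omega>_fg ij by simp
  thus ?thesis using \<omega>_fg ij by simp
qed

lemma TT_fg: "x \<in> TT \<Longrightarrow> fg x" using TT_iff CC_fg by blast

lemma claim1a: "g \<in> RR \<Longrightarrow> g oo \<omega> = \<omega> oo g"
proof -
  assume g: "g \<in> RR"
  have gf: "fg g" using g RR_fg by blast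
  obtain n where n: "n > 0" "gnpow \<omega> n = fps_X" by (rule \<omega>_ord)
  define z where "z = fps_inv g oo \<omega> oo g"
  have zC: "z \<in> CC" unfolding z_def by (rule RR_conj[OF g \<omega>_CC])
  have "gnpow z n = fps_inv g oo gipow \<omega> (int n) oo g"
    unfolding z_def using gipow_conj[OF \<omega>_fg gf, of "int n"] by simp
  also have "\<dots> = fps_X" using n gf by simp
  finally have zT: "z \<in> TT" using zC n by (auto simp: TT_iff)
  have "mult z = mult \<omega>" unfolding z_def using gf \<omega>_fg mult_nz[OF gf]
    by (simp add: mult_comp mult_inv)
  hence "z = \<omega>" using TT_inj[OF zT \<omega>T] by blast
  thus ?thesis using conj_to_comm'[OF gf \<omega>_fg] z_def by simp
qed

lemma RR_TT_comm: "g \<in> RR \<Longrightarrow> t \<in> TT \<Longrightarrow> g oo t = t oo g"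
proof -
  assume g: "g \<in> RR" and t: "t \<in> TT"
  obtain i where "t = gipow \<omega> i" using t \<omega>gen by auto
  thus ?thesis using gipow_comm[OF \<omega>_fg RR_fg[OF g] claim1a[OF g, symmetric], of i] by simp
qed

lemma coset_eq: "x \<in> CC \<Longrightarrow> gcoset x C1 = {y \<in> CC. mult y = mult x}"
proof safe
  fix y assume x: "x \<in> CC" and "y \<in> gcoset x C1"
  then obtain k where k: "k \<in> C1" "y = x oo k" by (auto simp: gcoset_def)
  show "y \<in> CC" using k x by (simp add: C1_iff CC_comp)
  show "mult y = mult x" using k x by (simp add: C1_iff mult_comp CC_fg)
next
  fix y assume x: "x \<in> CC" and y: "y \<in> CC" "mult y = mult x"
  have xf: "fg x" using x CC_fg by blast
  have "fps_inv x oo y \<in> C1" using x y xf CC_fg[OF y(1)] mult_nz[OF xf]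
    by (simp add: C1_iff CC_comp CC_inv mult_comp mult_inv)
  moreover have "y = x oo (fps_inv x oo y)" using xf CC_fg[OF y(1)] by simp
  ultimately show "y \<in> gcoset x C1" by (auto simp: gcoset_def)
qed

lemma index_eq: "gindex CC C1 = card (mult ` CC)"
proof -
  have "{gcoset g C1 | g. g \<in> CC} = (\<lambda>z. {y \<in> CC. mult y = z}) ` (mult ` CC)"
    using coset_eq by auto
  moreover have "inj_on (\<lambda>z. {y \<in> CC. mult y = z}) (mult ` CC)"
    by (auto simp: inj_on_def)
  ultimately show ?thesis unfolding gindex_def by (simp add: card_image)
qed

lemma card_TT: "card TT = card (mult ` TT)"
  by (rule card_image[symmetric]) (auto simp: inj_on_def intro: TT_inj)

end

lemma cisW_pow: "cis (2 * pi / real n) ^ k = cis (2 * pi * real k / real n)"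
proof -
  have e: "real k * (2 * pi / real n) = 2 * pi * real k / real n" by simp
  show ?thesis by (simp only: Complex.DeMoivre e)
qed

lemma cisW_n: "n > 0 \<Longrightarrow> cis (2 * pi / real n) ^ n = 1"
  by (simp add: cisW_pow)

lemma pow_divmod: "(x::complex) ^ k = (x ^ n) ^ (k div n) * x ^ (k mod n)"
proof -
  have "x ^ k = x ^ (n * (k div n) + k mod n)" by simp
  also have "\<dots> = (x ^ n) ^ (k div n) * x ^ (k mod n)" by (simp only: power_add power_mult)
  finally show ?thesis .
qed

lemma cisW_mod: "n > 0 \<Longrightarrow> cis (2 * pi / real n) ^ k = cis (2 * pi / real n) ^ (k mod n)"
proof -
  assume n: "n > 0"
  have "cis (2 * pi / real n) ^ k = (cis (2 * pi / real n) ^ n) ^ (k div n) * cis (2 * pi / real n) ^ (k mod n)"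
    by (rule pow_divmod)
  thus ?thesis using cisW_n[OF n] by simp
qed

lemma cisW_eq1: "n > 0 \<Longrightarrow> cis (2 * pi / real n) ^ k = 1 \<longleftrightarrow> n dvd k"
proof
  assume n: "n > 0" and e: "cis (2 * pi / real n) ^ k = 1"
  have inj: "inj_on (\<lambda>k. cis (2 * pi * real k / real n)) {..<n}"
    using Complex.bij_betw_roots_unity[OF n] by (simp add: bij_betw_def)
  have "cis (2 * pi * real (k mod n) / real n) = cis (2 * pi * real 0 / real n)"
    using e cisW_mod[OF n, of k] by (simp add: cisW_pow)
  hence "k mod n = 0" using inj n by (auto simp: inj_on_def)
  thus "n dvd k" by auto
next
  assume n: "n > 0" and "n dvd k"
  then obtain m where "k = n * m" by auto
  thus "cis (2 * pi / real n) ^ k = 1" using cisW_n[OF n] by (simp add: power_mult)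
qed

lemma cisW_roots: "n > 0 \<Longrightarrow> z ^ n = 1 \<Longrightarrow> \<exists>k<n. z = cis (2 * pi / real n) ^ k"
proof -
  assume n: "n > 0" and z: "z ^ n = 1"
  have "z \<in> (\<lambda>k. cis (2 * pi * real k / real n)) ` {..<n}"
    using Complex.bij_betw_roots_unity[OF n] z by (simp add: bij_betw_def)
  thus ?thesis by (auto simp: cisW_pow)
qed

context S5 begin

definition "MM = mult ` CC"
definition "WW = cis (2 * pi / real (2 * p))"
definition "ww = WW ^ 2"
definition "EE = {k. ww ^ k \<in> MM}"
definition "ee = (LEAST k. 0 < k \<and> k \<in> EE)"
definition "qq = p div ee"
definition "\<zeta> = ww ^ ee"

lemma p2_pos: "0 < 2 * p" using p_pos by simp

lemma WW_eq1: "WW ^ k = 1 \<longleftrightarrow> 2 * p dvd k"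
  unfolding WW_def by (rule cisW_eq1[OF p2_pos])

lemma WW_nz: "WW \<noteq> 0" by (simp add: WW_def)
lemma ww_nz: "ww \<noteq> 0" by (simp add: ww_def WW_nz)

lemma ww_eq1: "ww ^ k = 1 \<longleftrightarrow> p dvd k"
  using WW_eq1[of "2 * k"] by (simp add: ww_def power_mult[symmetric])

lemma MM_1: "1 \<in> MM" unfolding MM_def by (rule image_eqI[of _ _ fps_X]) (simp_all add: X_CC)
lemma MM_mult: "x \<in> MM \<Longrightarrow> y \<in> MM \<Longrightarrow> x * y \<in> MM"
proof -
  assume "x \<in> MM" "y \<in> MM"
  then obtain u v where uv: "u \<in> CC" "v \<in> CC" "x = mult u" "y = mult v" by (auto simp: MM_def)
  have "x * y = mult (u oo v)" using uv by (simp add: mult_comp CC_fg)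
  thus ?thesis using uv CC_comp unfolding MM_def by blast
qed
lemma MM_inv: "x \<in> MM \<Longrightarrow> inverse x \<in> MM"
proof -
  assume "x \<in> MM"
  then obtain u where uv: "u \<in> CC" "x = mult u" by (auto simp: MM_def)
  have "inverse x = mult (fps_inv u)" using uv by (simp add: mult_inv inverse_eq_divide)
  thus ?thesis using uv CC_inv unfolding MM_def by blast
qed
lemma MM_pow: "x \<in> MM \<Longrightarrow> x ^ k \<in> MM"
  by (induction k) (auto simp: MM_1 MM_mult)
lemma MM_root: "x \<in> MM \<Longrightarrow> x ^ p = 1"
  unfolding MM_def using mult_CC by auto

lemma p_EE: "p \<in> EE" using ww_eq1[of p] MM_1 by (simp add: EE_def)

lemma ee_prop: "0 < ee \<and> ee \<in> EE"
  unfolding ee_def by (rule LeastI[of _ p]) (use p_pos p_EE in auto)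

lemma ee_pos: "0 < ee" and ee_EE: "ee \<in> EE" using ee_prop by auto

lemma ee_dvd: "k \<in> EE \<Longrightarrow> ee dvd k"
proof (rule ccontr)
  assume k: "k \<in> EE" and nd: "\<not> ee dvd k"
  have r: "0 < k mod ee" "k mod ee < ee" using nd ee_pos by (auto simp: mod_greater_zero_iff_not_dvd)
  have "ww ^ k = (ww ^ ee) ^ (k div ee) * ww ^ (k mod ee)"
    by (rule pow_divmod)
  hence "ww ^ (k mod ee) = ww ^ k * inverse ((ww ^ ee) ^ (k div ee))"
    using ww_nz by (simp add: field_simps)
  moreover have "ww ^ k \<in> MM" "ww ^ ee \<in> MM" using k ee_EE by (auto simp: EE_def)
  ultimately have "k mod ee \<in> EE" by (simp add: EE_def MM_mult MM_inv MM_pow)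
  hence "0 < k mod ee \<and> k mod ee \<in> EE" using r(1) by simp
  hence "ee \<le> k mod ee" unfolding ee_def by (rule Least_le)
  thus False using r(2) by simp
qed

lemma ee_dvd_p: "ee dvd p" using ee_dvd p_EE by blast
lemma qq_ee: "qq * ee = p" using ee_dvd_p by (simp add: qq_def)
lemma qq_pos: "0 < qq" using qq_ee p_pos by (cases qq) auto

lemma \<zeta>_MM: "\<zeta> \<in> MM" using ee_EE by (simp add: \<zeta>_def EE_def)

lemma \<zeta>_eq1: "\<zeta> ^ i = 1 \<longleftrightarrow> qq dvd i"
proof -
  have "\<zeta> ^ i = 1 \<longleftrightarrow> p dvd ee * i" by (simp add: \<zeta>_def power_mult[symmetric] ww_eq1)
  also have "\<dots> \<longleftrightarrow> qq * ee dvd i * ee" using qq_ee by (simp add: mult.commute)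
  also have "\<dots> \<longleftrightarrow> qq dvd i" using ee_pos by simp
  finally show ?thesis .
qed

lemma MM_is_\<zeta>: "z \<in> MM \<Longrightarrow> \<exists>i. z = \<zeta> ^ i"
proof -
  assume z: "z \<in> MM"
  have "z ^ (2 * p) = (z ^ p) ^ 2" by (simp add: power_mult[symmetric] mult.commute)
  hence "z ^ (2 * p) = 1" using MM_root[OF z] by simp
  then obtain k where k: "z = WW ^ k" using cisW_roots[OF p2_pos] unfolding WW_def by blast
  have "WW ^ (k * p) = 1" using MM_root[OF z] k by (simp add: power_mult)
  hence "2 * p dvd k * p" by (simp add: WW_eq1)
  hence "2 dvd k" using p_pos by simp
  then obtain k' where k': "k = 2 * k'" by auto
  have "z = ww ^ k'" using k k' by (simp add: ww_def power_mult)
  hence "k' \<in> EE" using z by (simp add: EE_def)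
  then obtain i where "k' = ee * i" using ee_dvd by blast
  thus ?thesis using \<open>z = ww ^ k'\<close> by (intro exI[of _ i]) (simp add: \<zeta>_def power_mult)
qed

lemma \<zeta>_pow_mod: "\<zeta> ^ i = \<zeta> ^ (i mod qq)"
proof -
  have "\<zeta> ^ i = (\<zeta> ^ qq) ^ (i div qq) * \<zeta> ^ (i mod qq)"
    by (rule pow_divmod)
  thus ?thesis using \<zeta>_eq1[of qq] by simp
qed

lemma \<zeta>_nz: "\<zeta> \<noteq> 0" using ww_nz by (simp add: \<zeta>_def)

lemma \<zeta>_inj: "i < qq \<Longrightarrow> j < qq \<Longrightarrow> \<zeta> ^ i = \<zeta> ^ j \<Longrightarrow> i = j"
proof -
  have *: "i = j" if "i \<le> j" "j < qq" "\<zeta> ^ i = \<zeta> ^ j" for i j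
  proof -
    have "\<zeta> ^ j = \<zeta> ^ i * \<zeta> ^ (j - i)" using that(1) by (simp add: power_add[symmetric])
    hence "\<zeta> ^ (j - i) = 1" using that(3) \<zeta>_nz by simp
    hence d: "qq dvd j - i" by (simp add: \<zeta>_eq1)
    have "j - i < qq" using that by simp
    hence "j - i = 0" using d by (auto dest: dvd_imp_le)
    thus ?thesis using that by simp
  qed
  assume "i < qq" "j < qq" "\<zeta> ^ i = \<zeta> ^ j"
  thus "i = j" using *[of i j] *[of j i] by (cases "i \<le> j") auto
qed

lemma MM_eq: "MM = (\<lambda>i. \<zeta> ^ i) ` {..<qq}"
proof
  show "MM \<subseteq> (\<lambda>i. \<zeta> ^ i) ` {..<qq}"
  proof
    fix z assume "z \<in> MM"
    then obtain i where "z = \<zeta> ^ i" using MM_is_\<zeta> by blast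
    hence "z = \<zeta> ^ (i mod qq)" using \<zeta>_pow_mod by simp
    thus "z \<in> (\<lambda>i. \<zeta> ^ i) ` {..<qq}" using qq_pos by auto
  qed
  show "(\<lambda>i. \<zeta> ^ i) ` {..<qq} \<subseteq> MM" using \<zeta>_MM MM_pow by auto
qed

lemma card_MM: "card MM = qq"
proof -
  have "inj_on (\<lambda>i. \<zeta> ^ i) {..<qq}" using \<zeta>_inj by (auto simp: inj_on_def)
  thus ?thesis using MM_eq by (simp add: card_image)
qed

lemma RR_sq_CC: "g \<in> RR \<Longrightarrow> g oo g \<in> CC"
proof -
  assume g: "g \<in> RR"
  have gf: "fg g" using g RR_fg by blast
  have e: "fps_inv g oo f oo g = fps_inv f" using g by (simp add: RR_iff)
  have e1: "f oo g = g oo fps_inv f" using RR_eq[OF g] .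
  have "fps_inv (fps_inv g oo f oo g) = fps_inv g oo fps_inv f oo g"
    using gf f_fg by (simp add: inv_comp)
  hence "fps_inv g oo fps_inv f oo g = f" using e f_fg by simp
  hence "g oo (fps_inv g oo fps_inv f oo g) = g oo f" by simp
  hence e2: "fps_inv f oo g = g oo f" using gf f_fg by simp
  have "g oo g oo f = g oo (g oo f)" using gf f_fg by simp
  also have "\<dots> = g oo (fps_inv f oo g)" using e2 by simp
  also have "\<dots> = (g oo fps_inv f) oo g" using gf f_fg by simp
  also have "\<dots> = (f oo g) oo g" using e1 by simp
  also have "\<dots> = f oo (g oo g)" using gf f_fg by simp
  finally show ?thesis using g by (simp add: CC_iff RR_G)
qed

lemma RR_mult: "g \<in> RR \<Longrightarrow> \<exists>s. odd s \<and> mult g = WW ^ s \<and> ee dvd s \<and> mult (g oo g) = \<zeta> ^ (s div ee)"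
proof -
  assume g: "g \<in> RR"
  have gf: "fg g" using g RR_fg by blast
  have "mult g ^ (2 * p) = (mult g ^ p) ^ 2" by (simp add: power_mult[symmetric] mult.commute)
  hence "mult g ^ (2 * p) = 1" using mult_RR[OF g] by simp
  then obtain s where s: "mult g = WW ^ s" using cisW_roots[OF p2_pos] unfolding WW_def by blast
  have "odd s"
  proof
    assume "even s"
    then obtain t where "s = 2 * t" by auto
    hence "mult g ^ p = (WW ^ (2 * p)) ^ t" using s by (simp add: power_mult[symmetric] mult_ac)
    also have "\<dots> = 1" using WW_eq1[of "2 * p"] by simp
    finally show False using mult_RR[OF g] by simp
  qed
  have m2: "mult (g oo g) = ww ^ s" using s gf by (simp add: mult_comp ww_def power_mult[symmetric] mult_ac power2_eq_square power_mult_distrib)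
  hence "ww ^ s \<in> MM" unfolding MM_def using RR_sq_CC[OF g] by (metis image_eqI)
  hence "s \<in> EE" by (simp add: EE_def)
  hence d: "ee dvd s" by (rule ee_dvd)
  hence "mult (g oo g) = \<zeta> ^ (s div ee)" using m2 by (simp add: \<zeta>_def power_mult[symmetric])
  thus ?thesis using \<open>odd s\<close> s d by blast
qed

lemma RR_ne: obtains g0 where "g0 \<in> RR" using frev by (auto simp: reversible_def)

lemma ee_odd: "odd ee"
proof -
  obtain g0 where "g0 \<in> RR" by (rule RR_ne)
  then obtain s where "odd s" "ee dvd s" using RR_mult by blast
  thus ?thesis using dvd_trans[of 2 ee s] by blast
qed

lemma p_div_qq: "p div qq = ee"
proof -
  have "qq * ee div qq = ee" using qq_pos by simp
  thus ?thesis using qq_ee by simp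
qed
lemma claim2_part: "qq dvd p \<and> odd (p div qq)"
proof
  show "qq dvd p" by (rule dvd_triv_left[of qq ee, unfolded qq_ee])
  show "odd (p div qq)" using p_div_qq ee_odd by simp
qed

end

context S5 begin

lemma conj_fix: "fg g \<Longrightarrow> fg x \<Longrightarrow> x oo g = g oo x \<Longrightarrow> fps_inv g oo x oo g = x"
proof -
  assume a: "fg g" "fg x" "x oo g = g oo x"
  have "fps_inv g oo x oo g = fps_inv g oo (x oo g)" using a(1,2) by simp
  also have "\<dots> = fps_inv g oo (g oo x)" by (simp only: a(3))
  also have "\<dots> = x" using a(1,2) by simp
  finally show ?thesis .
qed

lemma t_exists: "\<exists>t \<in> TT. mult t = \<zeta>"
proof -
  obtain g0 where g0: "g0 \<in> RR" by (rule RR_ne)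
  have gf: "fg g0" using g0 RR_fg by blast
  obtain c where c0: "\<zeta> = mult c" "c \<in> CC" using \<zeta>_MM unfolding MM_def by (rule imageE)
  hence c: "c \<in> CC" "mult c = \<zeta>" by auto
  have cf: "fg c" using c CC_fg by blast
  have "mult (gnpow c qq) = 1" using c cf \<zeta>_eq1[of qq] by (simp add: mult_gnpow)
  then obtain k where k: "gnpow c qq = gipow h k" using C1_pow CC_gnpow[OF c(1)] by blast
  define u where "u = fps_inv c oo (fps_inv g0 oo c oo g0)"
  have uC: "u \<in> CC" unfolding u_def by (intro CC_comp CC_inv c RR_conj[OF g0])
  have "mult u = 1" unfolding u_def using cf gf mult_nz[OF cf] mult_nz[OF gf]
    by (simp add: mult_comp mult_inv)
  then obtain j where j: "u = gipow h j" using C1_pow uC by blast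
  have cj: "fps_inv g0 oo c oo g0 = c oo gipow h j"
  proof -
    have "c oo u = fps_inv g0 oo c oo g0" unfolding u_def using cf gf by simp
    thus ?thesis using j by simp
  qed
  have comm: "c oo gipow h j = gipow h j oo c" by (rule h_central_pow[OF c(1)])
  have "fps_inv g0 oo gnpow c qq oo g0 = gipow (fps_inv g0 oo c oo g0) (int qq)"
    using gipow_conj[OF cf gf, of "int qq"] by simp
  also have "\<dots> = gipow c (int qq) oo gipow (gipow h j) (int qq)"
    unfolding cj by (rule gipow_prod[OF cf gipow_fg[OF h_fg] comm])
  also have "\<dots> = gipow h (k + j * int qq)"
    using k h_fg by (simp add: gipow_mult gipow_add)
  finally have e1: "fps_inv g0 oo gnpow c qq oo g0 = gipow h (k + j * int qq)" .
  have "fps_inv g0 oo gnpow c qq oo g0 = gipow h (- k)"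
    using claim1b[OF g0, of k] k h_fg by (simp add: gipow_neg)
  hence kj: "- k = k + j * int qq" using e1 gipow_h_inj by simp
  obtain s where s: "odd s" "ee dvd s" "mult (g0 oo g0) = \<zeta> ^ (s div ee)" using RR_mult[OF g0] by blast
  define a where "a = s div ee"
  have "s = ee * a" using s(2) by (simp add: a_def)
  hence a_odd: "odd a" using s(1) by auto
  define y where "y = g0 oo g0"
  have yC: "y \<in> CC" unfolding y_def by (rule RR_sq_CC[OF g0])
  have "mult (fps_inv (gnpow c a) oo y) = 1"
    using s(3) c cf gf mult_nz[OF gnpow_fg[OF cf]] unfolding y_def a_def
    by (simp add: mult_comp mult_inv mult_gnpow)
  then obtain b where b: "fps_inv (gnpow c a) oo y = gipow h b"
    using C1_pow CC_comp[OF CC_inv[OF CC_gnpow[OF c(1)]] yC] by blast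
  have yb: "y = gnpow c a oo gipow h b"
  proof -
    have "gnpow c a oo (fps_inv (gnpow c a) oo y) = y" using cf gf by (simp add: y_def)
    thus ?thesis using b by simp
  qed
  have "fps_inv g0 oo y oo g0 = y" unfolding y_def using gf by simp
  also have "fps_inv g0 oo y oo g0 = (fps_inv g0 oo gnpow c a oo g0) oo (fps_inv g0 oo gipow h b oo g0)"
    unfolding yb using conj_comp[OF gf gnpow_fg[OF cf] gipow_fg[OF h_fg]] by simp
  also have "fps_inv g0 oo gnpow c a oo g0 = gipow (c oo gipow h j) (int a)"
    using gipow_conj[OF cf gf, of "int a"] cj by simp
  also have "\<dots> = gipow c (int a) oo gipow (gipow h j) (int a)"
    by (rule gipow_prod[OF cf gipow_fg[OF h_fg] comm])
  also have "gipow (gipow h j) (int a) = gipow h (j * int a)"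
    by (rule gipow_mult[OF h_fg, symmetric])
  also have "fps_inv g0 oo gipow h b oo g0 = gipow h (- b)"
    using claim1b[OF g0, of b] h_fg by (simp add: gipow_neg)
  finally have e: "gnpow c a oo gipow h (j * int a) oo gipow h (- b) = gnpow c a oo gipow h b"
    using yb by simp
  hence "gnpow c a oo (gipow h (j * int a) oo gipow h (- b)) = gnpow c a oo gipow h b"
    using cf h_fg by simp
  hence "gnpow c a oo gipow h (j * int a + - b) = gnpow c a oo gipow h b"
    by (simp only: gipow_add[OF h_fg])
  hence "gipow h (j * int a + - b) = gipow h b"
    by (rule cancel_left[OF gnpow_fg[OF cf] gipow_fg[OF h_fg] gipow_fg[OF h_fg]])
  hence "j * int a + - b = b" by (rule gipow_h_inj)
  hence "j * int a = 2 * b" by linarith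
  hence "even (j * int a)" by simp
  hence "even j" using a_odd by simp
  then obtain j' where j': "j = 2 * j'" by auto
  have kq: "k = - j' * int qq" using kj j' by simp
  define t where "t = c oo gipow h j'"
  have tC: "t \<in> CC" unfolding t_def by (intro CC_comp c CC_gipow h_CC)
  have comm': "c oo gipow h j' = gipow h j' oo c" by (rule h_central_pow[OF c(1)])
  have "gnpow t qq = gipow t (int qq)" by simp
  also have "\<dots> = gipow c (int qq) oo gipow (gipow h j') (int qq)"
    unfolding t_def by (rule gipow_prod[OF cf gipow_fg[OF h_fg] comm'])
  also have "\<dots> = gipow h (k + j' * int qq)" using k h_fg by (simp add: gipow_mult gipow_add)
  also have "\<dots> = fps_X" using kq by simp
  finally have "t \<in> TT" using tC qq_pos by (auto simp: TT_iff)
  moreover have "mult t = \<zeta>" unfolding t_def using c cf h_fg by (simp add: mult_comp mult_gipow mult_h)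
  ultimately show ?thesis by blast
qed

lemma TT_gnpow: "x \<in> TT \<Longrightarrow> gnpow x n \<in> TT"
proof -
  assume "x \<in> TT"
  then obtain i where "x = gipow \<omega> i" using \<omega>gen by auto
  hence "gnpow x n = gipow \<omega> (i * int n)" using \<omega>_fg by (simp add: gipow_mult)
  thus ?thesis using gipow_\<omega>_TT by simp
qed

lemma TT_gipow: "x \<in> TT \<Longrightarrow> gipow x n \<in> TT"
proof -
  assume "x \<in> TT"
  then obtain i where "x = gipow \<omega> i" using \<omega>gen by auto
  hence "gipow x n = gipow \<omega> (i * n)" using \<omega>_fg by (simp add: gipow_mult)
  thus ?thesis using gipow_\<omega>_TT by simp
qed

lemma multTT: "mult ` TT = MM"
proof
  show "mult ` TT \<subseteq> MM" unfolding MM_def by (auto simp: TT_iff)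
  show "MM \<subseteq> mult ` TT"
  proof
    fix z assume "z \<in> MM"
    then obtain i where z: "z = \<zeta> ^ i" using MM_is_\<zeta> by blast
    obtain t where t: "t \<in> TT" "mult t = \<zeta>" using t_exists by blast
    have "mult (gnpow t i) = z" using t z TT_fg[OF t(1)] by (simp add: mult_gnpow)
    thus "z \<in> mult ` TT" using TT_gnpow[OF t(1)] by blast
  qed
qed

lemma delta_eq: "card TT = qq"
  using card_TT multTT card_MM by simp

lemma index_qq: "gindex CC C1 = qq"
  using index_eq card_MM by (simp add: MM_def)

end

lemma gnpow2: "fg g \<Longrightarrow> gnpow g 2 = g oo g"
  by (simp add: numeral_2_eq_2 gnpow_Suc)

lemma dvd_mult_gcd_iff:
  fixes q k m :: nat
  assumes q: "0 < q"
  shows "q dvd k * m \<longleftrightarrow> (q div gcd k q) dvd m"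
proof -
  define G where "G = gcd k q"
  have G: "0 < G" using q by (simp add: G_def)
  obtain r where r: "q = G * r" unfolding G_def by (metis gcd_dvd2 dvd_def)
  obtain k' where k': "k = G * k'" unfolding G_def by (metis gcd_dvd1 dvd_def)
  have rq: "q div G = r" using r G by simp
  have cop: "coprime k' r"
  proof -
    have e1: "gcd (G * k') (G * r) = G * gcd k' r" by (rule gcd_mult_distrib_nat[symmetric])
    have "gcd (G * k') (G * r) = gcd k q" by (simp only: k'[symmetric] r[symmetric])
    also have "\<dots> = G" by (rule G_def[symmetric])
    finally have "G * gcd k' r = G * 1" using e1 by simp
    hence "gcd k' r = 1" using G by (simp only: mult_left_cancel)
    thus ?thesis by (simp add: coprime_iff_gcd_eq_1)
  qed
  have "q dvd k * m \<longleftrightarrow> G * r dvd G * (k' * m)" using r k' by (simp add: mult.assoc)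
  also have "\<dots> \<longleftrightarrow> r dvd k' * m" using G by simp
  also have "\<dots> \<longleftrightarrow> r dvd m" using cop by (simp add: coprime_dvd_mult_right_iff coprime_commute)
  finally show ?thesis using rq G_def by simp
qed

context S5 begin

lemma TT_CC: "x \<in> TT \<Longrightarrow> x \<in> CC" by (simp add: TT_iff)

lemma RR_sq:
  assumes g: "g \<in> RR" and t: "t \<in> TT" "mult t = \<zeta>"
  shows "\<exists>a. odd a \<and> g oo g = gnpow t a"
proof -
  have gf: "fg g" using g RR_fg by blast
  have tf: "fg t" using t TT_fg by blast
  obtain s where s: "odd s" "ee dvd s" "mult (g oo g) = \<zeta> ^ (s div ee)" using RR_mult[OF g] by blast
  define a where "a = s div ee"
  have "s = ee * a" using s(2) by (simp add: a_def)
  hence a_odd: "odd a" using s(1) by auto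
  define y where "y = g oo g"
  have yC: "y \<in> CC" unfolding y_def by (rule RR_sq_CC[OF g])
  have taT: "gnpow t a \<in> TT" by (rule TT_gnpow[OF t(1)])
  have "mult (fps_inv (gnpow t a) oo y) = 1"
    using s(3) t tf gf mult_nz[OF gnpow_fg[OF tf]] unfolding y_def a_def
    by (simp add: mult_comp mult_inv mult_gnpow)
  then obtain b where b: "fps_inv (gnpow t a) oo y = gipow h b"
    using C1_pow CC_comp[OF CC_inv[OF TT_CC[OF taT]] yC] by blast
  have yb: "y = gnpow t a oo gipow h b"
  proof -
    have "gnpow t a oo (fps_inv (gnpow t a) oo y) = y" using tf gf by (simp add: y_def)
    thus ?thesis using b by simp
  qed
  have "fps_inv g oo y oo g = y" unfolding y_def using gf by simp
  also have "fps_inv g oo y oo g = (fps_inv g oo gnpow t a oo g) oo (fps_inv g oo gipow h b oo g)"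
    unfolding yb using conj_comp[OF gf gnpow_fg[OF tf] gipow_fg[OF h_fg]] by simp
  also have "fps_inv g oo gnpow t a oo g = gnpow t a"
    using conj_fix[OF gf gnpow_fg[OF tf] RR_TT_comm[OF g taT, symmetric]] .
  also have "fps_inv g oo gipow h b oo g = gipow h (- b)"
    using claim1b[OF g, of b] h_fg by (simp add: gipow_neg)
  finally have "gnpow t a oo gipow h (- b) = gnpow t a oo gipow h b" using yb by simp
  hence "gipow h (- b) = gipow h b"
    by (rule cancel_left[OF gnpow_fg[OF tf] gipow_fg[OF h_fg] gipow_fg[OF h_fg]])
  hence "- b = b" by (rule gipow_h_inj)
  hence "b = 0" by simp
  thus ?thesis using yb a_odd tf unfolding y_def by auto
qed

lemma sq_exists:
  assumes t: "t \<in> TT" "mult t = \<zeta>" and l: "odd l"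
  shows "\<exists>g \<in> RR. g oo g = gipow t l"
proof -
  have tf: "fg t" using t TT_fg by blast
  obtain g0 where g0: "g0 \<in> RR" by (rule RR_ne)
  have gf: "fg g0" using g0 RR_fg by blast
  obtain a0 where a0: "odd a0" "g0 oo g0 = gnpow t a0" using RR_sq[OF g0 t] by blast
  define i where "i = (l - int a0) div 2"
  have li: "l = int a0 + 2 * i" using l a0(1) unfolding i_def by presburger
  define w where "w = gipow t i"
  have wT: "w \<in> TT" unfolding w_def by (rule TT_gipow[OF t(1)])
  have wC: "w \<in> CC" using wT TT_CC by blast
  have wf: "fg w" using wC CC_fg by blast
  define g where "g = g0 oo w"
  have gG: "g \<in> germG" unfolding g_def using g0 wC by (simp add: RR_G CC_G)
  have "fps_inv g oo f oo g = fps_inv w oo (fps_inv g0 oo f oo g0) oo w"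
    unfolding g_def using gf wf f_fg by (simp add: inv_comp)
  also have "\<dots> = fps_inv w oo fps_inv f oo w" using g0 by (simp add: RR_iff)
  also have "\<dots> = fps_inv f"
  proof (rule conj_fix[OF wf fg_inv[OF f_fg]])
    show "fps_inv f oo w = w oo fps_inv f"
      using inv_comm[OF f_fg wf] wC by (simp add: CC_iff)
  qed
  finally have gR: "g \<in> RR" using gG by (simp add: RR_iff)
  have c: "g0 oo w = w oo g0" by (rule RR_TT_comm[OF g0 wT])
  have "g oo g = g0 oo (w oo g0) oo w" unfolding g_def using gf wf by simp
  also have "\<dots> = g0 oo (g0 oo w) oo w" using c by simp
  also have "\<dots> = (g0 oo g0) oo (w oo w)" using gf wf by simp
  also have "\<dots> = gnpow t a0 oo (w oo w)" using a0(2) by simp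
  also have "w oo w = gipow t (i + i)" unfolding w_def by (rule gipow_add[OF tf, symmetric])
  also have "gnpow t a0 oo gipow t (i + i) = gipow t (int a0 + (i + i))"
    by (simp only: gipow_add[OF tf] gipow_nat)
  also have "int a0 + (i + i) = l" using li by simp
  finally show ?thesis using gR by blast
qed

lemma t_pow_X:
  assumes t: "t \<in> TT" "mult t = \<zeta>"
  shows "gipow t m = fps_X \<longleftrightarrow> int qq dvd m"
proof -
  have tf: "fg t" using t TT_fg by blast
  have tq: "gnpow t qq = fps_X"
  proof -
    have "mult (gnpow t qq) = 1" using t tf \<zeta>_eq1[of qq] by (simp add: mult_gnpow)
    thus ?thesis using TT_C1 TT_gnpow[OF t(1)] by blast
  qed
  have split: "gipow t m = gipow t (m mod int qq)"
  proof -
    have "gipow t m = gipow t (m mod int qq + int qq * (m div int qq))" by simp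
    also have "\<dots> = gipow t (m mod int qq) oo gipow (gipow t (int qq)) (m div int qq)"
      using tf by (simp only: gipow_add gipow_mult)
    also have "\<dots> = gipow t (m mod int qq)" using tq tf by simp
    finally show ?thesis .
  qed
  show ?thesis
  proof
    assume e: "gipow t m = fps_X"
    define r where "r = nat (m mod int qq)"
    have rr: "m mod int qq = int r" using qq_pos by (simp add: r_def)
    have "gnpow t r = fps_X" using e split rr by simp
    hence "\<zeta> ^ r = 1" using mult_gnpow[OF tf, of r] t by simp
    hence "qq dvd r" by (simp add: \<zeta>_eq1)
    moreover have "r < qq" using qq_pos rr by (metis of_nat_less_iff pos_mod_bound of_nat_0_less_iff)
    ultimately have "r = 0" by (auto dest: dvd_imp_le)
    thus "int qq dvd m" using rr by (simp add: dvd_eq_mod_eq_0)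
  next
    assume "int qq dvd m"
    hence "m mod int qq = 0" by simp
    thus "gipow t m = fps_X" using split by simp
  qed
qed

lemma RR_not_CC: "g \<in> RR \<Longrightarrow> g \<notin> CC"
proof
  assume g: "g \<in> RR" and gC: "g \<in> CC"
  have gf: "fg g" using g RR_fg by blast
  have "fps_inv g oo f oo g = f"
    using conj_fix[OF gf f_fg] gC by (simp add: CC_iff)
  hence "fps_inv f = f" using g by (simp add: RR_iff)
  hence "f oo f = fps_X" using f_fg inv_right by metis
  hence "gnpow f 2 = fps_X" using f_fg by (simp add: gnpow2)
  thus False using gnpow_f_X by fastforce
qed

lemma RR_pow_X:
  assumes g: "g \<in> RR" and t: "t \<in> TT" "mult t = \<zeta>" and ga: "g oo g = gipow t a"
  shows "gnpow g n = fps_X \<longleftrightarrow> even n \<and> int qq dvd a * int (n div 2)"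
proof -
  have gf: "fg g" using g RR_fg by blast
  have tf: "fg t" using t TT_fg by blast
  have even_pow: "gnpow g (2 * m) = gipow t (a * int m)" for m
    using gf tf ga by (simp add: gnpow_mult gnpow2 gipow_mult)
  show ?thesis
  proof (cases "even n")
    case True
    then obtain m where m: "n = 2 * m" by auto
    thus ?thesis using even_pow[of m] t_pow_X[OF t, of "a * int m"] by simp
  next
    case False
    then obtain m where m: "n = Suc (2 * m)" by (metis oddE Suc_eq_plus1)
    have "gnpow g n \<noteq> fps_X"
    proof
      assume "gnpow g n = fps_X"
      hence e: "gipow t (a * int m) oo g = fps_X" using m even_pow[of m] gf by (simp add: gnpow_Suc2)
      have "fps_inv (gipow t (a * int m)) = g" by (rule inv_unique[OF gipow_fg[OF tf] gf e])
      moreover have "fps_inv (gipow t (a * int m)) \<in> CC"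
        by (intro CC_inv CC_gipow TT_CC t(1))
      ultimately show False using RR_not_CC[OF g] by simp
    qed
    thus ?thesis using False by simp
  qed
qed

lemma RR_gord:
  assumes g: "g \<in> RR" and t: "t \<in> TT" "mult t = \<zeta>" and ga: "g oo g = gipow t a" and a: "odd a"
  shows "gord g = 2 * (qq div gcd (nat \<bar>a\<bar>) qq)"
proof -
  define r where "r = qq div gcd (nat \<bar>a\<bar>) qq"
  have key: "int qq dvd a * int m \<longleftrightarrow> r dvd m" for m
  proof -
    have ab: "\<bar>a * int m\<bar> = \<bar>a\<bar> * int m" by (simp add: abs_mult)
    have "int qq dvd a * int m \<longleftrightarrow> int qq dvd \<bar>a * int m\<bar>" by (simp only: dvd_abs_iff)
    hence "int qq dvd a * int m \<longleftrightarrow> int qq dvd \<bar>a\<bar> * int m" by (simp only: ab)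
    also have "\<bar>a\<bar> * int m = int (nat \<bar>a\<bar> * m)" by simp
    also have "int qq dvd int (nat \<bar>a\<bar> * m) \<longleftrightarrow> qq dvd nat \<bar>a\<bar> * m" by (rule int_dvd_int_iff)
    also have "\<dots> \<longleftrightarrow> r dvd m" unfolding r_def by (rule dvd_mult_gcd_iff[OF qq_pos])
    finally show ?thesis .
  qed
  have P: "gnpow g n = fps_X \<longleftrightarrow> 2 * r dvd n" for n
  proof -
    have "gnpow g n = fps_X \<longleftrightarrow> even n \<and> r dvd n div 2" using RR_pow_X[OF g t ga] key by simp
    also have "\<dots> \<longleftrightarrow> 2 * r dvd n"
    proof
      assume "even n \<and> r dvd n div 2"
      then obtain m c where "n = 2 * m" "m = r * c" by (metis dvdE evenE nonzero_mult_div_cancel_left zero_neq_numeral)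
      thus "2 * r dvd n" by simp
    next
      assume "2 * r dvd n"
      then obtain c where "n = 2 * r * c" by auto
      thus "even n \<and> r dvd n div 2" by simp
    qed
    finally show ?thesis .
  qed
  have g1: "gcd (nat \<bar>a\<bar>) qq \<le> qq" using qq_pos by (intro gcd_le2_nat) simp
  have g2: "0 < gcd (nat \<bar>a\<bar>) qq" using qq_pos by (intro gcd_pos_nat[THEN iffD2]) simp
  have r_pos: "0 < r" unfolding r_def using g1 g2 by (simp only: div_greater_zero_iff)
  have ex: "\<exists>n>0. gnpow g n = fps_X" using P r_pos by (intro exI[of _ "2 * r"]) auto
  have "(LEAST n. n > 0 \<and> gnpow g n = fps_X) = 2 * r"
  proof (rule Least_equality)
    show "0 < 2 * r \<and> gnpow g (2 * r) = fps_X" using P r_pos by simp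
  next
    fix y assume "0 < y \<and> gnpow g y = fps_X"
    thus "2 * r \<le> y" using P by (auto dest: dvd_imp_le)
  qed
  thus ?thesis using ex by (simp add: gord_def r_def)
qed

lemma orders_eq: "gord ` RR = {2 * r | r. 0 < r \<and> r dvd qq \<and> odd (qq div r)}"
proof -
  obtain t where t: "t \<in> TT" "mult t = \<zeta>" using t_exists by blast
  have tf: "fg t" using t TT_fg by blast
  show ?thesis
  proof safe
    fix g assume g: "g \<in> RR"
    obtain a where a: "odd a" "g oo g = gnpow t a" using RR_sq[OF g t] by blast
    have ga: "g oo g = gipow t (int a)" using a by simp
    have "gord g = 2 * (qq div gcd a qq)" using RR_gord[OF g t ga] a by simp
    moreover have "0 < qq div gcd a qq" using qq_pos by (simp add: div_greater_zero_iff gcd_le2_nat)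
    moreover have "qq div gcd a qq dvd qq" by (metis dvd_div_mult_self dvd_triv_left gcd_dvd2)
    moreover have "qq div (qq div gcd a qq) = gcd a qq"
      using div_div_eq_right[of "gcd a qq" qq qq] qq_pos by simp
    moreover have "odd (gcd a qq)" using a(1) by (metis dvd_trans gcd_dvd1)
    ultimately show "\<exists>r. gord g = 2 * r \<and> 0 < r \<and> r dvd qq \<and> odd (qq div r)" by auto
  next
    fix r assume r: "0 < r" "r dvd qq" "odd (qq div r)"
    define l where "l = qq div r"
    obtain g where g: "g \<in> RR" "g oo g = gipow t (int l)"
      using sq_exists[OF t, of "int l"] r(3) by (auto simp: l_def)
    have "gord g = 2 * (qq div gcd l qq)" using RR_gord[OF g(1) t g(2)] r(3) by (simp add: l_def)
    also have "gcd l qq = l"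
    proof -
      obtain c where c: "qq = r * c" using r(2) by auto
      have "l = c" unfolding l_def using c r(1) by simp
      hence "l dvd qq" using c by simp
      thus ?thesis by (simp add: gcd_proj1_if_dvd)
    qed
    also have "qq div l = r" unfolding l_def using div_div_eq_right[of r qq qq] r qq_pos by simp
    finally show "2 * r \<in> gord ` RR" using g(1) by (metis image_eqI)
  qed
qed

lemma \<zeta>_exp: "\<zeta> = exp (2 * pi * \<i> / of_nat qq)"
proof -
  have "\<zeta> = WW ^ (2 * ee)" by (simp add: \<zeta>_def ww_def power_mult)
  also have "\<dots> = cis (2 * pi * real (2 * ee) / real (2 * p))" unfolding WW_def by (rule cisW_pow)
  also have "2 * pi * real (2 * ee) / real (2 * p) = 2 * pi / real qq"
  proof -
    have rp: "real p = real qq * real ee"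
    proof -
      have "real (qq * ee) = real qq * real ee" by simp
      thus ?thesis by (simp only: qq_ee)
    qed
    have "2 * pi * real (2 * ee) / real (2 * p) = 2 * pi * (2 * real ee) / (2 * (real qq * real ee))"
      by (simp only: rp of_nat_mult of_nat_numeral)
    also have "\<dots> = 2 * pi / real qq" using ee_pos qq_pos by (simp add: field_simps)
    finally show ?thesis .
  qed
  also have "cis (2 * pi / real qq) = exp (2 * pi * \<i> / of_nat qq)"
    by (simp add: cis_conv_exp field_simps)
  finally show ?thesis .
qed

lemma squares_eq:
  assumes m: "mult \<omega> = \<zeta>"
  shows "{gnpow g 2 | g. g \<in> RR} = {gipow \<omega> l | l. odd l}"
proof safe
  fix g assume g: "g \<in> RR"
  obtain a where a: "odd a" "g oo g = gnpow \<omega> a" using RR_sq[OF g \<omega>T m] by blast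
  have "gnpow g 2 = gipow \<omega> (int a)" using a RR_fg[OF g] by (simp add: gnpow2)
  moreover have "odd (int a)" using a by simp
  ultimately show "\<exists>l. gnpow g 2 = gipow \<omega> l \<and> odd l" by blast
next
  fix l :: int assume "odd l"
  then obtain g where g: "g \<in> RR" "g oo g = gipow \<omega> l" using sq_exists[OF \<omega>T m] by blast
  thus "\<exists>g'. gipow \<omega> l = gnpow g' 2 \<and> g' \<in> RR" using RR_fg[OF g(1)] by (metis gnpow2)
qed

end

theorem theorem5p1:
  fixes p :: nat and f h \<omega> :: "complex fps" and d q \<delta> :: nat
  assumes fA: "f \<in> germAp p"
    and frev: "reversible f"
    and fnf: "\<not> flowable f"
    and hC: "h \<in> centraliser f germG1"
    and hgen: "centraliser f germG1 = range (gipow h)"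
    and dpos: "0 < d" and hd: "gnpow h d = f"
    and qdef: "q = gindex (centraliser f germG) (centraliser f germG1)"
    and \<delta>def: "\<delta> = card (torsion (centraliser f germG))"
    and \<omega>T: "\<omega> \<in> torsion (centraliser f germG)"
    and \<omega>gen: "torsion (centraliser f germG) = range (gipow \<omega>)"
  shows "(\<forall>g \<in> reversers f. g oo \<omega> = \<omega> oo g \<and>
            (\<forall>r::int. fps_inv g oo gipow h r oo g = fps_inv (gipow h r)))
       \<and> (\<delta> = q \<and> q dvd p \<and> odd (p div q))
       \<and> (mult \<omega> = exp (2 * pi * \<i> / of_nat \<delta>) \<longrightarrow>
            {gnpow g 2 | g. g \<in> reversers f} = {gipow \<omega> l | l. odd l})
       \<and> gord ` reversers f = {2 * r | r. 0 < r \<and> r dvd q \<and> odd (q div r)}"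
  proof -
  interpret S5 p f h \<omega> d
    using fA frev hC hgen dpos hd \<omega>T \<omega>gen by unfold_locales auto
  have q: "q = qq" using qdef index_qq by simp
  have \<delta>: "\<delta> = qq" using \<delta>def delta_eq by simp
  have c1: "\<forall>g \<in> reversers f. g oo \<omega> = \<omega> oo g \<and>
            (\<forall>r::int. fps_inv g oo gipow h r oo g = fps_inv (gipow h r))"
    using claim1a claim1b by blast
  have c2: "\<delta> = q \<and> q dvd p \<and> odd (p div q)" using q \<delta> claim2_part by simp
  have c3: "mult \<omega> = exp (2 * pi * \<i> / of_nat \<delta>) \<longrightarrow>
            {gnpow g 2 | g. g \<in> reversers f} = {gipow \<omega> l | l. odd l}"
  proof
    assume "mult \<omega> = exp (2 * pi * \<i> / of_nat \<delta>)"
    hence "mult \<omega> = \<zeta>" using \<delta> \<zeta>_exp by simp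
    thus "{gnpow g 2 | g. g \<in> reversers f} = {gipow \<omega> l | l. odd l}" by (rule squares_eq)
  qed
  have c4: "gord ` reversers f = {2 * r | r. 0 < r \<and> r dvd q \<and> odd (q div r)}"
    using orders_eq q by simp
  show ?thesis using c1 c2 c3 c4 by blast
qed

end
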